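(* Let $\kappa,u_0\in\mathbb{R}$ and let $f(\zeta,u)$ be a complex function on a connected open set $U\subset\mathbb{C}_\zeta\times\{u>u_0\}$, jointly smooth and holomorphic in $\zeta$, with $f_{,\zeta\zeta}\neq0$ and $f_{,\zeta\zeta\zeta}\neq0$ on $U$. Put $\phi=(\ln f_{,\zeta\zeta})_{,\zeta}$ and $\psi=(\ln f_{,\zeta\zeta})_{,u}$. Then $$\left((u-u_0)\frac{\psi}{\phi}\right)_{,\zeta}=\left(\frac{2i\kappa-2}{\phi}\right)_{,\zeta}+i\kappa\quad\text{on }U$$ if and only if, near every point of $U$, $$f(\zeta,u)=\frac{1}{(u-u_0)^2}\,\mathrm{f}\big(\zeta(u-u_0)^{i\kappa}-h(u)\big)+A_1(u)\zeta+A_0(u)$$ for some holomorphic function $\mathrm{f}$ of one complex variable with $\mathrm{f}'''\neq0$ and smooth complex functions $h,A_1,A_0$ of $u$, where $(u-u_0)^{i\kappa}=e^{i\kappa\ln(u-u_0)}$.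
   Context: Subscripts after a comma denote partial derivatives; $\zeta$ is a complex variable and $u$ a real variable; primes denote derivatives of $\mathrm{f}$ with respect to its argument. *)

theory Defs
  imports "HOL-Analysis.Analysis"
begin

primrec iter_dderiv :: "('a::real_normed_vector \<Rightarrow> 'b::real_normed_vector) \<Rightarrow> 'a list \<Rightarrow> 'a \<Rightarrow> 'b" where
  "iter_dderiv g [] = g"
| "iter_dderiv g (v # vs) = (\<lambda>x. frechet_derivative (iter_dderiv g vs) (at x) v)"

definition smooth_on :: "'a::real_normed_vector set \<Rightarrow> ('a \<Rightarrow> 'b::real_normed_vector) \<Rightarrow> bool" where
  "smooth_on S g \<longleftrightarrow> open S \<and>
     (\<forall>vs. continuous_on S (iter_dderiv g vs) \<and> (\<forall>x\<in>S. iter_dderiv g vs differentiable (at x)))"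

definition fzz :: "(complex \<Rightarrow> real \<Rightarrow> complex) \<Rightarrow> complex \<Rightarrow> real \<Rightarrow> complex" where
  "fzz f z u = (deriv ^^ 2) (\<lambda>w. f w u) z"

definition fzzz :: "(complex \<Rightarrow> real \<Rightarrow> complex) \<Rightarrow> complex \<Rightarrow> real \<Rightarrow> complex" where
  "fzzz f z u = (deriv ^^ 3) (\<lambda>w. f w u) z"

text \<open>phi = (ln f_zz)_z and psi = (ln f_zz)_u, written as logarithmic derivatives.\<close>
definition phi :: "(complex \<Rightarrow> real \<Rightarrow> complex) \<Rightarrow> complex \<Rightarrow> real \<Rightarrow> complex" where
  "phi f z u = deriv (\<lambda>w. fzz f w u) z / fzz f z u"

definition psi :: "(complex \<Rightarrow> real \<Rightarrow> complex) \<Rightarrow> complex \<Rightarrow> real \<Rightarrow> complex" where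
  "psi f z u = vector_derivative (\<lambda>t. fzz f z t) (at u) / fzz f z u"

definition cpow_ik :: "real \<Rightarrow> real \<Rightarrow> real \<Rightarrow> complex" where
  "cpow_ik \<kappa> u0 u = exp (\<i> * of_real (\<kappa> * ln (u - u0)))"

end

theory Submission
  imports Defs "HOL-Complex_Analysis.Complex_Analysis"
begin


definition vd :: "(real \<Rightarrow> 'a::real_normed_vector) \<Rightarrow> real \<Rightarrow> 'a" where
  "vd g = (\<lambda>x. vector_derivative g (at x))"

fun Ck :: "nat \<Rightarrow> real set \<Rightarrow> (real \<Rightarrow> 'a::real_normed_vector) \<Rightarrow> bool" where
  "Ck 0 S g = True"
| "Ck (Suc n) S g = ((\<forall>x\<in>S. g differentiable (at x)) \<and> Ck n S (vd g))"

lemma vd_cong: "open S \<Longrightarrow> (\<And>x. x\<in>S \<Longrightarrow> f x = g x) \<Longrightarrow> x \<in> S \<Longrightarrow> vd f x = vd g x"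
  unfolding vd_def
  by (rule vector_derivative_cong_eq[where A=UNIV and B=UNIV, simplified])
     (auto simp: eventually_nhds intro!: exI[of _ S])

lemma Ck_cong: "open S \<Longrightarrow> (\<And>x. x\<in>S \<Longrightarrow> f x = g x) \<Longrightarrow> Ck n S f \<Longrightarrow> Ck n S g"
proof (induction n arbitrary: f g)
  case 0 then show ?case by simp
next
  case (Suc n)
  have "\<forall>x\<in>S. g differentiable (at x)"
  proof
    fix x assume x: "x \<in> S"
    then obtain D where "(f has_derivative D) (at x)" using Suc.prems(3) x by (auto simp: differentiable_def)
    then have "(g has_derivative D) (at x)"
      by (rule has_derivative_transform_within_open[OF _ \<open>open S\<close> x]) (use Suc.prems in auto)
    then show "g differentiable (at x)" unfolding differentiable_def by blast
  qed
  moreover have "Ck n S (vd g)"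
    using Suc.IH[of "vd f" "vd g"] Suc.prems vd_cong[of S f g] by auto
  ultimately show ?case by simp
qed

lemma Ck_mono: "Ck (Suc n) S g \<Longrightarrow> Ck n S g"
  by (induction n arbitrary: g) auto

lemma Ck_mono_le: "Ck n S g \<Longrightarrow> m \<le> n \<Longrightarrow> Ck m S g"
  apply (induction n) apply simp using Ck_mono le_Suc_eq by blast

lemma vd_at: "(g has_vector_derivative g') (at x) \<Longrightarrow> vd g x = g'"
  by (simp add: vd_def vector_derivative_at)

lemma diff_vd: "g differentiable (at x) \<Longrightarrow> (g has_vector_derivative vd g x) (at x)"
  by (simp add: vd_def vector_derivative_works)

lemma Ck_SucI:
  assumes "open S" "\<And>x. x \<in> S \<Longrightarrow> (g has_vector_derivative g' x) (at x)" "Ck n S g'"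
  shows "Ck (Suc n) S g"
proof -
  have "\<forall>x\<in>S. g differentiable (at x)" using assms(2)
    by (auto simp: differentiable_def has_vector_derivative_def)
  moreover have "Ck n S (vd g)"
    using Ck_cong[OF assms(1) _ assms(3), of "vd g"] assms(2) vd_at by metis
  ultimately show ?thesis by simp
qed

lemma Ck_SucD:
  assumes "Ck (Suc n) S g" "x \<in> S" shows "(g has_vector_derivative vd g x) (at x)"
  using assms by (auto intro: diff_vd)

definition smooth1 :: "real set \<Rightarrow> (real \<Rightarrow> 'a::real_normed_vector) \<Rightarrow> bool" where
  "smooth1 S g \<longleftrightarrow> (\<forall>n. Ck n S g)"

lemma smooth1_SucI:
  assumes "open S" "\<And>x. x \<in> S \<Longrightarrow> (g has_vector_derivative g' x) (at x)" "smooth1 S g'"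
  shows "smooth1 S g"
  unfolding smooth1_def
proof
  fix n show "Ck n S g"
    using Ck_SucI[OF assms(1,2), of n] assms(3) Ck_mono unfolding smooth1_def by blast
qed

lemma smooth1_vd: "smooth1 S g \<Longrightarrow> smooth1 S (vd g)"
  unfolding smooth1_def by (metis Ck.simps(2))

lemma smooth1_diff: "smooth1 S g \<Longrightarrow> x \<in> S \<Longrightarrow> (g has_vector_derivative vd g x) (at x)"
  unfolding smooth1_def by (metis Ck_SucD)

lemma smooth1_cong: "open S \<Longrightarrow> (\<And>x. x\<in>S \<Longrightarrow> f x = g x) \<Longrightarrow> smooth1 S f \<Longrightarrow> smooth1 S g"
  unfolding smooth1_def by (metis Ck_cong)

lemma smooth1_funpow: "smooth1 S g \<Longrightarrow> smooth1 S ((vd ^^ k) g)"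
  by (induction k) (auto intro: smooth1_vd)

lemma smooth1_iter:
  fixes g :: "real \<Rightarrow> 'a::real_normed_vector"
  assumes "open S" "smooth1 S g"
  shows "\<forall>x\<in>S. iter_dderiv g vs x = prod_list vs *\<^sub>R (vd ^^ length vs) g x
              \<and> (iter_dderiv g vs has_derivative (\<lambda>v. v *\<^sub>R (prod_list vs *\<^sub>R (vd ^^ Suc (length vs)) g x))) (at x)"
proof (induction vs)
  case Nil
  show ?case
  proof
    fix x assume "x \<in> S"
    then have "(g has_vector_derivative vd g x) (at x)" using smooth1_diff assms by blast
    then show "iter_dderiv g [] x = prod_list [] *\<^sub>R (vd ^^ length []) g x \<and>
         (iter_dderiv g [] has_derivative (\<lambda>v. v *\<^sub>R prod_list [] *\<^sub>R (vd ^^ Suc (length [])) g x)) (at x)"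
      by (simp add: has_vector_derivative_def)
  qed
next
  case (Cons w vs)
  let ?D = "(vd ^^ length vs) g"
  show ?case
  proof
    fix x assume x: "x \<in> S"
    have eq: "\<And>y. y \<in> S \<Longrightarrow> prod_list vs *\<^sub>R ?D y = iter_dderiv g vs y" using Cons by auto
    have "iter_dderiv g (w # vs) x = frechet_derivative (iter_dderiv g vs) (at x) w" by simp
    also have "\<dots> = w *\<^sub>R (prod_list vs *\<^sub>R (vd ^^ Suc (length vs)) g x)"
      using Cons x frechet_derivative_at by metis
    finally have 1: "iter_dderiv g (w # vs) x = prod_list (w#vs) *\<^sub>R (vd ^^ length (w#vs)) g x" by simp
    have 2: "prod_list (w#vs) *\<^sub>R (vd ^^ length (w#vs)) g y = iter_dderiv g (w # vs) y" if "y \<in> S" for y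
    proof -
      have "iter_dderiv g (w # vs) y = frechet_derivative (iter_dderiv g vs) (at y) w" by simp
      also have "\<dots> = w *\<^sub>R (prod_list vs *\<^sub>R (vd ^^ Suc (length vs)) g y)"
        using Cons that frechet_derivative_at by metis
      finally show ?thesis by simp
    qed
    have sm: "smooth1 S ((vd ^^ length (w#vs)) g)" by (rule smooth1_funpow[OF assms(2)])
    have "((vd ^^ length (w#vs)) g has_vector_derivative vd ((vd ^^ length (w#vs)) g) x) (at x)"
      using smooth1_diff[OF sm x] .
    then have "((\<lambda>y. prod_list (w#vs) *\<^sub>R (vd ^^ length (w#vs)) g y) has_derivative
        (\<lambda>v. v *\<^sub>R (prod_list (w#vs) *\<^sub>R (vd ^^ Suc (length (w#vs))) g x))) (at x)"
      unfolding has_vector_derivative_def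
      by (auto intro!: derivative_eq_intros simp: algebra_simps)
    then have "(iter_dderiv g (w # vs) has_derivative
        (\<lambda>v. v *\<^sub>R (prod_list (w#vs) *\<^sub>R (vd ^^ Suc (length (w#vs))) g x))) (at x)"
      by (rule has_derivative_transform_within_open[OF _ assms(1) x]) (use 2 in auto)
    with 1 show "iter_dderiv g (w # vs) x = prod_list (w # vs) *\<^sub>R (vd ^^ length (w # vs)) g x \<and>
         (iter_dderiv g (w # vs) has_derivative
          (\<lambda>v. v *\<^sub>R prod_list (w # vs) *\<^sub>R (vd ^^ Suc (length (w # vs))) g x)) (at x)" by simp
  qed
qed

lemma smooth1_smooth_on:
  fixes g :: "real \<Rightarrow> 'a::real_normed_vector"
  assumes "open S" "smooth1 S g"
  shows "smooth_on S g"
  unfolding smooth_on_def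
proof (intro conjI allI)
  fix vs
  have d: "\<forall>x\<in>S. iter_dderiv g vs differentiable (at x)"
    using smooth1_iter[OF assms, of vs] unfolding differentiable_def by blast
  then show "\<forall>x\<in>S. iter_dderiv g vs differentiable (at x)" .
  show "continuous_on S (iter_dderiv g vs)"
    using d by (simp add: continuous_at_imp_continuous_on differentiable_imp_continuous_within)
qed (rule assms)

lemma Ck_subset: "Ck n S g \<Longrightarrow> T \<subseteq> S \<Longrightarrow> Ck n T g"
  by (induction n arbitrary: g) auto

lemma smooth1_subset: "smooth1 S g \<Longrightarrow> T \<subseteq> S \<Longrightarrow> smooth1 T g"
  unfolding smooth1_def by (metis Ck_subset)

lemma Ck_const: "open S \<Longrightarrow> Ck n S (\<lambda>x. c)"
proof (induction n arbitrary: c)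
  case (Suc n) then show ?case
    by (intro Ck_SucI[of S _ "\<lambda>x. 0"]) (auto intro!: derivative_eq_intros)
qed simp

lemma Ck_add:
  fixes f g :: "real \<Rightarrow> 'a::real_normed_vector"
  shows "open S \<Longrightarrow> Ck n S f \<Longrightarrow> Ck n S g \<Longrightarrow> Ck n S (\<lambda>x. f x + g x)"
proof (induction n arbitrary: f g)
  case (Suc n)
  show ?case
    apply (rule Ck_SucI[of S _ "\<lambda>x. vd f x + vd g x"])
    using Suc by (auto intro!: has_vector_derivative_add diff_vd)
qed simp

lemma Ck_linear:
  fixes f :: "real \<Rightarrow> 'a::real_normed_vector"
  assumes L: "bounded_linear L"
  shows "open S \<Longrightarrow> Ck n S f \<Longrightarrow> Ck n S (\<lambda>x. L (f x))"
proof (induction n arbitrary: f)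
  case (Suc n)
  show ?case
    apply (rule Ck_SucI[of S _ "\<lambda>x. L (vd f x)"])
    using Suc by (auto intro!: bounded_linear.has_vector_derivative[OF L] diff_vd)
qed simp

lemma Ck_mult:
  fixes f g :: "real \<Rightarrow> 'a::real_normed_algebra"
  shows "open S \<Longrightarrow> Ck n S f \<Longrightarrow> Ck n S g \<Longrightarrow> Ck n S (\<lambda>x. f x * g x)"
proof (induction n arbitrary: f g)
  case (Suc n)
  have a: "Ck n S f" "Ck n S g" using Suc.prems(2,3) by (auto intro: Ck_mono)
  have "Ck n S (\<lambda>x. f x * vd g x + vd f x * g x)"
    using Suc a by (intro Ck_add Suc.IH) auto
  then show ?case
    apply (intro Ck_SucI[of S _ "\<lambda>x. f x * vd g x + vd f x * g x"])
    using Suc by (auto intro!: has_vector_derivative_mult diff_vd)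
qed simp

lemma Ck_scaleR:
  fixes f :: "real \<Rightarrow> real" and g :: "real \<Rightarrow> 'a::real_normed_vector"
  shows "open S \<Longrightarrow> Ck n S f \<Longrightarrow> Ck n S g \<Longrightarrow> Ck n S (\<lambda>x. f x *\<^sub>R g x)"
proof (induction n arbitrary: f g)
  case (Suc n)
  have a: "Ck n S f" "Ck n S g" using Suc.prems(2,3) by (auto intro: Ck_mono)
  have "Ck n S (\<lambda>x. f x *\<^sub>R vd g x + vd f x *\<^sub>R g x)"
    using Suc a by (intro Ck_add Suc.IH) auto
  then show ?case
    apply (intro Ck_SucI[of S _ "\<lambda>x. f x *\<^sub>R vd g x + vd f x *\<^sub>R g x"])
  proof -
    fix x assume x: "x \<in> S"
    have "(f has_vector_derivative vd f x) (at x)" "(g has_vector_derivative vd g x) (at x)"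
      using Suc x by (auto intro: diff_vd)
    then show "((\<lambda>x. f x *\<^sub>R g x) has_vector_derivative f x *\<^sub>R vd g x + vd f x *\<^sub>R g x) (at x)"
      by (auto intro!: has_vector_derivative_scaleR simp: has_real_derivative_iff_has_vector_derivative)
  qed (use Suc in auto)
qed simp

lemma Ck_id: "open S \<Longrightarrow> Ck n S (\<lambda>x::real. x)"
proof (cases n)
  case (Suc m) assume "open S" then show ?thesis unfolding Suc
    by (intro Ck_SucI[of S _ "\<lambda>x. 1"] Ck_const) (auto intro!: derivative_eq_intros)
qed simp

lemma Ck_holo:
  fixes f :: "real \<Rightarrow> complex"
  shows "open S \<Longrightarrow> open T \<Longrightarrow> g holomorphic_on T \<Longrightarrow> (\<And>x. x \<in> S \<Longrightarrow> f x \<in> T)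
     \<Longrightarrow> Ck n S f \<Longrightarrow> Ck n S (\<lambda>x. g (f x))"
proof (induction n arbitrary: f g)
  case (Suc n)
  have hd: "deriv g holomorphic_on T" using Suc holomorphic_deriv by blast
  have a: "Ck n S f" using Suc.prems(5) by (auto intro: Ck_mono)
  have "Ck n S (\<lambda>x. vd f x * deriv g (f x))"
    using Suc hd a by (intro Ck_mult Suc.IH[of "deriv g" f]) auto
  then show ?case
  proof (intro Ck_SucI[of S _ "\<lambda>x. vd f x * deriv g (f x)"])
    fix x assume x: "x \<in> S"
    have "(f has_vector_derivative vd f x) (at x)" using Suc x by (auto intro: diff_vd)
    moreover have "(g has_field_derivative deriv g (f x)) (at (f x))"
      using Suc x by (metis DERIV_deriv_iff_field_differentiable holomorphic_on_imp_differentiable_at)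
    ultimately show "((\<lambda>x. g (f x)) has_vector_derivative vd f x * deriv g (f x)) (at x)"
      using field_vector_diff_chain_at unfolding o_def by blast
  qed (use Suc in auto)
qed simp

lemma smooth1_const: "open S \<Longrightarrow> smooth1 S (\<lambda>x. c)"
  unfolding smooth1_def by (simp add: Ck_const)
lemma smooth1_id: "open S \<Longrightarrow> smooth1 S (\<lambda>x. x)"
  unfolding smooth1_def by (simp add: Ck_id)
lemma smooth1_add: "open S \<Longrightarrow> smooth1 S f \<Longrightarrow> smooth1 S g \<Longrightarrow> smooth1 S (\<lambda>x. f x + g x)"
  unfolding smooth1_def by (simp add: Ck_add)
lemma smooth1_linear: "bounded_linear L \<Longrightarrow> open S \<Longrightarrow> smooth1 S f \<Longrightarrow> smooth1 S (\<lambda>x. L (f x))"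
  unfolding smooth1_def by (simp add: Ck_linear)
lemma smooth1_mult:
  fixes f g :: "real \<Rightarrow> 'a::real_normed_algebra"
  shows "open S \<Longrightarrow> smooth1 S f \<Longrightarrow> smooth1 S g \<Longrightarrow> smooth1 S (\<lambda>x. f x * g x)"
  unfolding smooth1_def by (simp add: Ck_mult)
lemma smooth1_scaleR: "open S \<Longrightarrow> smooth1 S f \<Longrightarrow> smooth1 S g \<Longrightarrow> smooth1 S (\<lambda>x. f x *\<^sub>R g x)"
  unfolding smooth1_def by (simp add: Ck_scaleR)
lemma smooth1_holo:
  fixes f :: "real \<Rightarrow> complex"
  shows "open S \<Longrightarrow> open T \<Longrightarrow> g holomorphic_on T \<Longrightarrow> (\<And>x. x \<in> S \<Longrightarrow> f x \<in> T)
     \<Longrightarrow> smooth1 S f \<Longrightarrow> smooth1 S (\<lambda>x. g (f x))"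
  unfolding smooth1_def using Ck_holo by blast

lemma smooth1_diff':
  fixes f g :: "real \<Rightarrow> 'a::real_normed_vector"
  shows "open S \<Longrightarrow> smooth1 S f \<Longrightarrow> smooth1 S g \<Longrightarrow> smooth1 S (\<lambda>x. f x - g x)"
  using smooth1_add[of S f "\<lambda>x. - g x"] smooth1_linear[of uminus S g]
  by (simp add: bounded_linear_minus[OF bounded_linear_ident])

lemma smooth1_inverse:
  fixes f :: "real \<Rightarrow> complex"
  shows "open S \<Longrightarrow> smooth1 S f \<Longrightarrow> (\<And>x. x \<in> S \<Longrightarrow> f x \<noteq> 0) \<Longrightarrow> smooth1 S (\<lambda>x. inverse (f x))"
  by (rule smooth1_holo[where T="-{0}"]) (auto intro!: holomorphic_intros)

lemma smooth1_divide:
  fixes f g :: "real \<Rightarrow> complex"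
  shows "open S \<Longrightarrow> smooth1 S f \<Longrightarrow> smooth1 S g \<Longrightarrow> (\<And>x. x \<in> S \<Longrightarrow> g x \<noteq> 0) \<Longrightarrow> smooth1 S (\<lambda>x. f x / g x)"
  using smooth1_mult[OF _ _ smooth1_inverse, of S f g] by (simp add: field_simps)

lemma smooth1_exp:
  fixes f :: "real \<Rightarrow> complex"
  shows "open S \<Longrightarrow> smooth1 S f \<Longrightarrow> smooth1 S (\<lambda>x. exp (f x))"
  by (rule smooth1_holo[where T=UNIV]) (auto intro!: holomorphic_intros)

lemma smooth1_of_real: "open S \<Longrightarrow> smooth1 S (\<lambda>x. complex_of_real x)"
  using smooth1_linear[OF bounded_linear_of_real _ smooth1_id] by simp




lemma iter_dderiv_append: "iter_dderiv (iter_dderiv K ws) vs = iter_dderiv K (vs @ ws)"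
  by (induction vs) auto

definition SM :: "'a::real_normed_vector set \<Rightarrow> ('a \<Rightarrow> 'b::real_normed_vector) \<Rightarrow> bool" where
  "SM U K \<longleftrightarrow> (\<forall>vs. continuous_on U (iter_dderiv K vs) \<and> (\<forall>x\<in>U. iter_dderiv K vs differentiable (at x)))"

lemma SM_iter: "SM U K \<Longrightarrow> SM U (iter_dderiv K ws)"
  unfolding SM_def iter_dderiv_append by blast

lemma smooth_on_SM: "smooth_on U K \<Longrightarrow> SM U K"
  unfolding smooth_on_def SM_def by blast

lemma frechet_derivative_cong_open:
  assumes "open U" "\<And>x. x \<in> U \<Longrightarrow> f x = g x" "x \<in> U"
  shows "frechet_derivative f (at x) = frechet_derivative g (at x)"
proof -
  have "(f has_derivative D) (at x) \<longleftrightarrow> (g has_derivative D) (at x)" for D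
  proof
    assume "(f has_derivative D) (at x)"
    then show "(g has_derivative D) (at x)"
      by (rule has_derivative_transform_within_open[OF _ assms(1,3)]) (use assms(2) in auto)
  next
    assume "(g has_derivative D) (at x)"
    then show "(f has_derivative D) (at x)"
      by (rule has_derivative_transform_within_open[OF _ assms(1,3)]) (use assms(2) in auto)
  qed
  then show ?thesis unfolding frechet_derivative_def by simp
qed

lemma iter_dderiv_cong:
  assumes "open U" "\<And>x. x \<in> U \<Longrightarrow> f x = g x"
  shows "x \<in> U \<Longrightarrow> iter_dderiv f vs x = iter_dderiv g vs x"
proof (induction vs arbitrary: x)
  case Nil then show ?case using assms by simp
next
  case (Cons v vs)
  then show ?case using frechet_derivative_cong_open[OF assms(1) Cons.IH] by simp
qed

lemma SM_cong:
  assumes "open U" "\<And>x. x \<in> U \<Longrightarrow> f x = g x" "SM U f"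
  shows "SM U g"
  unfolding SM_def
proof (intro allI conjI)
  fix vs
  have e: "\<And>x. x \<in> U \<Longrightarrow> iter_dderiv f vs x = iter_dderiv g vs x"
    by (rule iter_dderiv_cong[OF assms(1)]) (use assms(2) in auto)
  show "continuous_on U (iter_dderiv g vs)"
  proof (rule continuous_on_eq)
    show "continuous_on U (iter_dderiv f vs)" using assms(3) unfolding SM_def by blast
  qed (use e in auto)
  show "\<forall>x\<in>U. iter_dderiv g vs differentiable at x"
  proof
    fix x assume x: "x \<in> U"
    then obtain D where "(iter_dderiv f vs has_derivative D) (at x)"
      using assms(3) unfolding SM_def differentiable_def by blast
    then have "(iter_dderiv g vs has_derivative D) (at x)"
      by (rule has_derivative_transform_within_open[OF _ assms(1) x]) (use e in auto)
    then show "iter_dderiv g vs differentiable at x" unfolding differentiable_def by blast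
  qed
qed

lemma SM_hasderiv: "SM U K \<Longrightarrow> x \<in> U \<Longrightarrow> (K has_derivative frechet_derivative K (at x)) (at x)"
proof -
  assume "SM U K" "x \<in> U"
  then have "iter_dderiv K [] differentiable (at x)" unfolding SM_def by blast
  then show ?thesis by (simp add: frechet_derivative_works[symmetric])
qed

lemma SM_cont: "SM U K \<Longrightarrow> continuous_on U K"
proof -
  assume "SM U K"
  then have "continuous_on U (iter_dderiv K [])" unfolding SM_def by blast
  then show ?thesis by simp
qed

lemma linear_pair_decomp:
  assumes "linear L"
  shows "L (a::complex, b::real) = Re a *\<^sub>R L (1,0) + Im a *\<^sub>R L (\<i>,0) + b *\<^sub>R L (0,1)"
proof -
  have "(a, b) = Re a *\<^sub>R (1,0) + Im a *\<^sub>R (\<i>,0) + b *\<^sub>R ((0::complex),(1::real))"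
    by (simp add: prod_eq_iff complex_eq_iff)
  then have "L (a,b) = L (Re a *\<^sub>R (1,0) + Im a *\<^sub>R (\<i>,0) + b *\<^sub>R ((0::complex),(1::real)))" by simp
  also have "\<dots> = L (Re a *\<^sub>R (1,0)) + L (Im a *\<^sub>R (\<i>,0)) + L (b *\<^sub>R ((0::complex),(1::real)))"
    by (simp only: linear_add[OF assms])
  also have "\<dots> = Re a *\<^sub>R L (1,0) + Im a *\<^sub>R L (\<i>,0) + b *\<^sub>R L (0,1)"
    by (simp only: linear_scale[OF assms])
  finally show ?thesis .
qed

lemma curve_chain:
  fixes K :: "complex \<times> real \<Rightarrow> 'b::real_normed_vector"
  assumes K: "(K has_derivative L) (at (g1 t, g2 t))"
    and g1: "(g1 has_vector_derivative a) (at t)" and g2: "(g2 has_vector_derivative b) (at t)"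
  shows "((\<lambda>t. K (g1 t, g2 t)) has_vector_derivative L (a, b)) (at t)"
proof -
  have "((\<lambda>t. (g1 t, g2 t)) has_derivative (\<lambda>h. (h *\<^sub>R a, h *\<^sub>R b))) (at t)"
    using g1 g2 unfolding has_vector_derivative_def by (rule has_derivative_Pair)
  from diff_chain_at[OF this K] have "((\<lambda>t. K (g1 t, g2 t)) has_derivative (\<lambda>h. L (h *\<^sub>R a, h *\<^sub>R b))) (at t)"
    by (simp add: o_def)
  moreover have "L (h *\<^sub>R a, h *\<^sub>R b) = h *\<^sub>R L (a, b)" for h
    using linear_scale[OF has_derivative_linear[OF K], of h "(a,b)"] by (simp add: scaleR_prod_def)
  ultimately show ?thesis unfolding has_vector_derivative_def by simp
qed

lemma Ck_curve:
  fixes K :: "complex \<times> real \<Rightarrow> 'b::real_normed_vector"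
  assumes S: "open S" and g1: "smooth1 S g1" and g2: "smooth1 S (g2 :: real \<Rightarrow> real)"
    and sub: "\<And>t. t \<in> S \<Longrightarrow> (g1 t, g2 t) \<in> U"
  shows "SM U K \<Longrightarrow> Ck n S (\<lambda>t. K (g1 t, g2 t))"
proof (induction n arbitrary: K)
  case 0 then show ?case by simp
next
  case (Suc n)
  let ?K1 = "iter_dderiv K [(1,0)]" and ?K2 = "iter_dderiv K [(\<i>,0)]" and ?K3 = "iter_dderiv K [(0,1)]"
  have sm: "SM U ?K1" "SM U ?K2" "SM U ?K3" using Suc.prems SM_iter by blast+
  have ck: "Ck n S (\<lambda>t. ?K1 (g1 t, g2 t))" "Ck n S (\<lambda>t. ?K2 (g1 t, g2 t))" "Ck n S (\<lambda>t. ?K3 (g1 t, g2 t))"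
    using Suc.IH[OF sm(1)] Suc.IH[OF sm(2)] Suc.IH[OF sm(3)] by auto
  have r: "smooth1 S (\<lambda>t. Re (vd g1 t))" "smooth1 S (\<lambda>t. Im (vd g1 t))" "smooth1 S (vd g2)"
    using smooth1_linear[OF bounded_linear_Re S smooth1_vd[OF g1]]
      smooth1_linear[OF bounded_linear_Im S smooth1_vd[OF g1]] smooth1_vd[OF g2] by auto
  have "Ck n S (\<lambda>t. Re (vd g1 t) *\<^sub>R ?K1 (g1 t, g2 t) + Im (vd g1 t) *\<^sub>R ?K2 (g1 t, g2 t)
        + vd g2 t *\<^sub>R ?K3 (g1 t, g2 t))"
    using ck r S unfolding smooth1_def by (intro Ck_add Ck_scaleR) blast+
  then show ?case
  proof (rule Ck_SucI[OF S, rotated])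
    fix t assume t: "t \<in> S"
    have hd: "(K has_derivative frechet_derivative K (at (g1 t, g2 t))) (at (g1 t, g2 t))"
      using SM_hasderiv[OF Suc.prems sub[OF t]] .
    have e: "frechet_derivative K (at (g1 t, g2 t)) (vd g1 t, vd g2 t) = Re (vd g1 t) *\<^sub>R ?K1 (g1 t, g2 t) + Im (vd g1 t) *\<^sub>R ?K2 (g1 t, g2 t)
        + vd g2 t *\<^sub>R ?K3 (g1 t, g2 t)"
      using linear_pair_decomp[OF has_derivative_linear[OF hd], of "vd g1 t" "vd g2 t"] by simp
    from curve_chain[OF hd smooth1_diff[OF g1 t] smooth1_diff[OF g2 t]]
    show "((\<lambda>t. K (g1 t, g2 t)) has_vector_derivative
          Re (vd g1 t) *\<^sub>R ?K1 (g1 t, g2 t) + Im (vd g1 t) *\<^sub>R ?K2 (g1 t, g2 t)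
        + vd g2 t *\<^sub>R ?K3 (g1 t, g2 t)) (at t)" unfolding e .
  qed
qed

lemma smooth1_curve:
  fixes K :: "complex \<times> real \<Rightarrow> 'b::real_normed_vector"
  assumes "open S" "smooth1 S g1" "smooth1 S (g2 :: real \<Rightarrow> real)"
    "\<And>t. t \<in> S \<Longrightarrow> (g1 t, g2 t) \<in> U" "SM U K"
  shows "smooth1 S (\<lambda>t. K (g1 t, g2 t))"
  unfolding smooth1_def using Ck_curve[OF assms(1-4) assms(5)] by blast




definition pz :: "(complex \<times> real \<Rightarrow> complex) \<Rightarrow> complex \<times> real \<Rightarrow> complex" where
  "pz K p = deriv (\<lambda>w. K (w, snd p)) (fst p)"
definition pu :: "(complex \<times> real \<Rightarrow> complex) \<Rightarrow> complex \<times> real \<Rightarrow> complex" where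
  "pu K p = vector_derivative (\<lambda>t. K (fst p, t)) (at (snd p))"
definition slicehol :: "(complex \<times> real) set \<Rightarrow> (complex \<times> real \<Rightarrow> complex) \<Rightarrow> bool" where
  "slicehol U K \<longleftrightarrow> (\<forall>p\<in>U. (\<lambda>w. K (w, snd p)) field_differentiable at (fst p))"
definition HS where "HS U K \<longleftrightarrow> SM U K \<and> slicehol U K"

lemma open_slice: "open (U :: (complex \<times> real) set) \<Longrightarrow> open {w. (w, u) \<in> U}"
proof -
  assume "open U"
  have "{w. (w, u) \<in> U} = (\<lambda>w. (w, u)) -` U" by auto
  moreover have "continuous_on UNIV (\<lambda>w::complex. (w, u))" by (intro continuous_intros)
  ultimately show ?thesis using open_vimage[OF \<open>open U\<close>, of "\<lambda>w::complex. (w, u)"] by simp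
qed

lemma slice_deriv_z:
  assumes "(K has_derivative L) (at (z, u))"
  shows "((\<lambda>w. K (w, u)) has_derivative (\<lambda>a. L (a, 0))) (at z)"
proof -
  have "((\<lambda>w. (w, u)) has_derivative (\<lambda>a. (a, 0))) (at z)"
    by (rule has_derivative_Pair[OF has_derivative_ident has_derivative_const, simplified])
  from diff_chain_at[OF this assms] show ?thesis by (simp add: o_def)
qed

lemma slice_deriv_u:
  assumes "(K has_derivative L) (at (z, u))"
  shows "((\<lambda>t. K (z, t)) has_vector_derivative L (0, 1)) (at u)"
proof -
  have "((\<lambda>t. (z, t)) has_derivative (\<lambda>b. (0, b))) (at u)"
    by (rule has_derivative_Pair[OF has_derivative_const has_derivative_ident, simplified])
  from diff_chain_at[OF this assms] have "((\<lambda>t. K (z, t)) has_derivative (\<lambda>b. L (0, b))) (at u)"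
    by (simp add: o_def)
  moreover have "L (0, b) = b *\<^sub>R L (0, 1)" for b
  proof -
    have "L (0, b) = L (b *\<^sub>R (0, 1))" by simp
    also have "\<dots> = b *\<^sub>R L (0, 1)" by (rule linear_scale[OF has_derivative_linear[OF assms]])
    finally show ?thesis .
  qed
  then have "(\<lambda>b. L (0, b)) = (\<lambda>b. b *\<^sub>R L (0, 1))" by (rule ext)
  ultimately show ?thesis unfolding has_vector_derivative_def by metis
qed

lemma fd_z:
  assumes "SM U K" "p \<in> U" "slicehol U K"
  shows "frechet_derivative K (at p) (a, 0) = a * pz K p"
proof -
  obtain z u where p: "p = (z, u)" by (cases p)
  have hd: "(K has_derivative frechet_derivative K (at p)) (at p)" using SM_hasderiv assms by blast
  have 1: "((\<lambda>w. K (w, u)) has_derivative (\<lambda>a. frechet_derivative K (at p) (a, 0))) (at z)"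
    using slice_deriv_z[OF hd[unfolded p]] p by simp
  have "(\<lambda>w. K (w, u)) field_differentiable at z" using assms p unfolding slicehol_def by auto
  then have "((\<lambda>w. K (w, u)) has_field_derivative pz K p) (at z)"
    unfolding pz_def p by (simp add: DERIV_deriv_iff_field_differentiable)
  then have 2: "((\<lambda>w. K (w, u)) has_derivative (\<lambda>a. pz K p * a)) (at z)"
    by (simp add: has_field_derivative_def)
  have "(\<lambda>a. frechet_derivative K (at p) (a, 0)) = (\<lambda>a. pz K p * a)"
    using has_derivative_unique[OF 1 2] .
  then show ?thesis by (metis mult.commute)
qed

lemma fd_u:
  assumes "SM U K" "p \<in> U"
  shows "frechet_derivative K (at p) (0, 1) = pu K p"
    and "((\<lambda>t. K (fst p, t)) has_vector_derivative pu K p) (at (snd p))"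
proof -
  obtain z u where p: "p = (z, u)" by (cases p)
  have hd: "(K has_derivative frechet_derivative K (at p)) (at p)" using SM_hasderiv assms by blast
  have 1: "((\<lambda>t. K (z, t)) has_vector_derivative frechet_derivative K (at p) (0, 1)) (at u)"
    using slice_deriv_u[OF hd[unfolded p]] p by simp
  then show "frechet_derivative K (at p) (0, 1) = pu K p"
    unfolding pu_def p by (simp add: vector_derivative_at)
  with 1 show "((\<lambda>t. K (fst p, t)) has_vector_derivative pu K p) (at (snd p))" using p by simp
qed

lemma iter_z: "SM U K \<Longrightarrow> slicehol U K \<Longrightarrow> p \<in> U \<Longrightarrow> iter_dderiv K [(1,0)] p = pz K p"
  using fd_z[of U K p 1] by simp

lemma iter_u: "SM U K \<Longrightarrow> p \<in> U \<Longrightarrow> iter_dderiv K [(0,1)] p = pu K p"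
  using fd_u[of U K p] by simp

lemma SM_pz: assumes "open U" "HS U K" shows "SM U (pz K)"
proof (rule SM_cong[OF assms(1) _ SM_iter[of U K "[(1,0)]"]])
  fix x assume "x \<in> U" then show "iter_dderiv K [(1,0)] x = pz K x"
    using iter_z[of U K x] assms \<open>x \<in> U\<close> unfolding HS_def by simp
qed (use assms in \<open>simp add: HS_def\<close>)

lemma SM_pu: assumes "open U" "SM U K" shows "SM U (pu K)"
proof (rule SM_cong[OF assms(1) _ SM_iter[of U K "[(0,1)]"]])
  fix x assume "x \<in> U" then show "iter_dderiv K [(0,1)] x = pu K x"
    using iter_u[of U K x] assms \<open>x \<in> U\<close> by simp
qed (use assms in simp)

lemma slicehol_holo: assumes "slicehol U K" shows "(\<lambda>w. K (w, u)) holomorphic_on {w. (w, u) \<in> U}"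
  unfolding holomorphic_on_def
proof
  fix w assume "w \<in> {w. (w, u) \<in> U}"
  then have "(\<lambda>w'. K (w', snd (w,u))) field_differentiable at (fst (w,u))"
    using assms unfolding slicehol_def by blast
  then show "(\<lambda>w. K (w, u)) field_differentiable at w within {w. (w, u) \<in> U}"
    by (simp add: field_differentiable_at_within)
qed

lemma slicehol_pz: "open U \<Longrightarrow> slicehol U K \<Longrightarrow> slicehol U (pz K)"
  unfolding slicehol_def
proof
  fix p assume U: "open U" "\<forall>p\<in>U. (\<lambda>w. K (w, snd p)) field_differentiable at (fst p)" and p: "p \<in> U"
  obtain z u where pp: "p = (z, u)" by (cases p)
  have "(\<lambda>w. K (w, u)) holomorphic_on {w. (w, u) \<in> U}"
    using slicehol_holo U(2) unfolding slicehol_def by blast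
  then have "deriv (\<lambda>w. K (w, u)) holomorphic_on {w. (w, u) \<in> U}"
    using holomorphic_deriv open_slice[OF U(1)] by blast
  moreover have eq: "(\<lambda>w. pz K (w, u)) = deriv (\<lambda>w. K (w, u))" by (simp add: pz_def)
  moreover have "z \<in> {w. (w, u) \<in> U}" using p pp by simp
  ultimately have "deriv (\<lambda>w. K (w, u)) field_differentiable at z"
    using holomorphic_on_imp_differentiable_at[OF _ open_slice[OF U(1)]] by blast
  then have "(\<lambda>w. pz K (w, u)) field_differentiable at z" unfolding eq .
  then show "(\<lambda>w. pz K (w, snd p)) field_differentiable at (fst p)" using pp by simp
qed

lemma HS_pz: "open U \<Longrightarrow> HS U K \<Longrightarrow> HS U (pz K)"
  using SM_pz slicehol_pz unfolding HS_def by blast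




lemma hol_pu:
  assumes U: "open U" and HS: "HS U K" and p: "p \<in> U"
  shows "(\<lambda>w. pu K (w, snd p)) field_differentiable at (fst p)"
proof -
  obtain z u where pp: "p = (z, u)" by (cases p)
  have SM: "SM U K" and sh: "slicehol U K" using HS HS_def by auto
  obtain e0 where e0: "e0 > 0" "ball (z, u) e0 \<subseteq> U" using U p pp open_contains_ball by blast
  define e where "e = e0 / 3"
  have e: "e > 0" using e0 by (simp add: e_def)
  have C: "cball z e \<times> cball u e \<subseteq> U"
  proof
    fix q assume q: "q \<in> cball z e \<times> cball u e"
    obtain w t where qq: "q = (w, t)" by (cases q)
    have "dist (z, u) (w, t) = sqrt ((dist z w)\<^sup>2 + (dist u t)\<^sup>2)" by (rule dist_Pair_Pair)
    also have "\<dots> \<le> \<bar>dist z w\<bar> + \<bar>dist u t\<bar>" by (rule sqrt_sum_squares_le_sum_abs)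
    also have "\<dots> \<le> 2 * e" using q qq by auto
    also have "\<dots> < e0" using e0 e_def by simp
    finally have "q \<in> ball (z, u) e0" using qq by simp
    then show "q \<in> U" using e0 by blast
  qed
  define A where "A = iter_dderiv K [(0,1)]"
  have contA: "continuous_on U A" using SM unfolding SM_def A_def by blast
  have Apu: "A q = pu K q" if "q \<in> U" for q unfolding A_def using iter_u SM that by blast
  have hdK: "(K has_derivative frechet_derivative K (at q)) (at q)" if "q \<in> U" for q
    using SM_hasderiv SM that by blast
  have Afd: "A q = frechet_derivative K (at q) (0, 1)" for q unfolding A_def by simp
  have ucA: "uniformly_continuous_on (cball z e \<times> cball u e) A"
    by (rule compact_uniformly_continuous[OF continuous_on_subset[OF contA C]]) (simp add: compact_Times)
  define Dq where "Dq h w = (K (w, u + h) - K (w, u)) / of_real h" for h :: real and w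
  have ev: "eventually (\<lambda>h. continuous_on (cball z e) (Dq h) \<and> (Dq h) holomorphic_on ball z e) (at (0::real))"
    unfolding eventually_at
  proof (intro exI[of _ e] conjI ballI impI)
    fix h :: real assume h: "h \<noteq> 0 \<and> dist h 0 < e"
    have fd: "Dq h field_differentiable at w" if w: "w \<in> cball z e" for w
    proof -
      have "(w, u + h) \<in> U" "(w, u) \<in> U" using C w h e by (auto simp: dist_real_def)
      then have "(\<lambda>w'. K (w', snd (w, u + h))) field_differentiable at (fst (w, u+h))"
         "(\<lambda>w'. K (w', snd (w, u))) field_differentiable at (fst (w, u))"
        using sh unfolding slicehol_def by blast+
      then have "(\<lambda>w. K (w, u + h)) field_differentiable at w" "(\<lambda>w. K (w, u)) field_differentiable at w"
        by simp_all
      then show ?thesis unfolding Dq_def using h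
        by (intro field_differentiable_divide field_differentiable_diff field_differentiable_const) auto
    qed
    show "continuous_on (cball z e) (Dq h)"
      using fd by (simp add: continuous_at_imp_continuous_on field_differentiable_imp_continuous_at)
    show "Dq h holomorphic_on ball z e"
      using fd unfolding holomorphic_on_def by (simp add: field_differentiable_at_within)
  qed (use e in auto)
  have ul: "uniform_limit (cball z e) Dq (\<lambda>w. pu K (w, u)) (at 0)"
  proof (rule uniform_limitI)
    fix \<epsilon> :: real assume \<epsilon>: "\<epsilon> > 0"
    then have "\<epsilon> / 2 > 0" by simp
    then obtain d where d: "d > 0"
      "\<And>x x'. x \<in> cball z e \<times> cball u e \<Longrightarrow> x' \<in> cball z e \<times> cball u e \<Longrightarrow> dist x' x < d
         \<Longrightarrow> dist (A x') (A x) < \<epsilon> / 2"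
      using ucA unfolding uniformly_continuous_on_def by blast
    show "\<forall>\<^sub>F h in at 0. \<forall>w\<in>cball z e. dist (Dq h w) (pu K (w, u)) < \<epsilon>"
      unfolding eventually_at
    proof (intro exI[of _ "min d e"] conjI ballI impI)
      fix h :: real and w assume h: "h \<noteq> 0 \<and> dist h 0 < min d e" and w: "w \<in> cball z e"
      define S where "S = cball u \<bar>h\<bar>"
      have Ssub: "S \<subseteq> cball u e" using h by (auto simp: S_def dist_real_def)
      have inC: "(w, t) \<in> cball z e \<times> cball u e" if "t \<in> S" for t using that Ssub w by auto
      have der: "((\<lambda>t. K (w, t)) has_derivative (\<lambda>b. b *\<^sub>R A (w, t))) (at t within S)" if t: "t \<in> S" for t
      proof -
        have "(w, t) \<in> U" using inC[OF t] C by blast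
        from slice_deriv_u[OF hdK[OF this]]
        have "((\<lambda>t. K (w, t)) has_vector_derivative A (w, t)) (at t)" by (simp add: Afd)
        then show ?thesis unfolding has_vector_derivative_def by (rule has_derivative_at_withinI)
      qed
      have bnd: "onorm ((\<lambda>b. b *\<^sub>R A (w, t)) - (\<lambda>b. b *\<^sub>R A (w, u))) \<le> \<epsilon> / 2" if t: "t \<in> S" for t
      proof -
        have "(\<lambda>b::real. b *\<^sub>R A (w, t)) - (\<lambda>b. b *\<^sub>R A (w, u)) = (\<lambda>b. b *\<^sub>R (A (w, t) - A (w, u)))"
          by (auto simp: fun_eq_iff algebra_simps)
        then have "onorm ((\<lambda>b. b *\<^sub>R A (w, t)) - (\<lambda>b. b *\<^sub>R A (w, u))) = norm (A (w, t) - A (w, u))"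
          using onorm_scaleR_left[OF bounded_linear_ident, of "A (w, t) - A (w, u)"] onorm_id[where 'a=real] by simp
        also have "\<dots> = dist (A (w, t)) (A (w, u))" by (simp add: dist_norm)
        also have "\<dots> < \<epsilon> / 2"
        proof (rule d(2)[OF inC[of u] inC[OF t]])
          show "u \<in> S" using S_def by simp
          have "dist (w, t) (w, u) = dist t u" by (simp add: dist_Pair_Pair)
          also have "\<dots> \<le> \<bar>h\<bar>" using t S_def by (simp add: dist_commute)
          also have "\<dots> < d" using h by simp
          finally show "dist (w, t) (w, u) < d" .
        qed
        finally show ?thesis by simp
      qed
      have "norm ((\<lambda>t. K (w, t)) (u + h) - (\<lambda>t. K (w, t)) u - (\<lambda>b. b *\<^sub>R A (w, u)) ((u + h) - u))
            \<le> norm ((u + h) - u) * (\<epsilon> / 2)"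
      proof (rule differentiable_bound_linearization[of u "u + h" S _ "\<lambda>t b. b *\<^sub>R A (w, t)"])
        fix \<tau> :: real assume "\<tau> \<in> {0..1}"
        then show "u + \<tau> *\<^sub>R (u + h - u) \<in> S"
          by (auto simp: S_def dist_real_def abs_mult intro!: mult_left_le_one_le)
      qed (use der bnd S_def in auto)
      then have nb: "norm (K (w, u + h) - K (w, u) - of_real h * A (w, u)) \<le> \<bar>h\<bar> * (\<epsilon> / 2)"
        by (simp add: scaleR_conv_of_real)
      have "(w, u) \<in> U" using inC[of u] C S_def by auto
      then have "pu K (w, u) = A (w, u)" using Apu by simp
      then have "dist (Dq h w) (pu K (w, u)) = norm (K (w, u + h) - K (w, u) - of_real h * A (w, u)) / \<bar>h\<bar>"
        using h by (simp add: Dq_def dist_norm field_simps norm_divide)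
      also have "\<dots> \<le> \<epsilon> / 2" using nb h by (simp add: divide_le_eq mult.commute)
      also have "\<dots> < \<epsilon>" using \<epsilon> by simp
      finally show "dist (Dq h w) (pu K (w, u)) < \<epsilon>" .
    qed (use d e in auto)
  qed
  obtain "(\<lambda>w. pu K (w, u)) holomorphic_on ball z e"
    using holomorphic_uniform_limit[OF ev ul trivial_limit_at] by blast
  then have "(\<lambda>w. pu K (w, u)) field_differentiable at z"
    using holomorphic_on_imp_differentiable_at[of _ "ball z e" z] e by simp
  then show ?thesis using pp by simp
qed

lemma HS_pu: "open U \<Longrightarrow> HS U K \<Longrightarrow> SM U (pu K) \<and> slicehol U (pu K)"
  using SM_pu hol_pu unfolding HS_def slicehol_def by blast




lemma cpow_ik_norm: "norm (cpow_ik \<kappa> u0 t) = 1"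
  unfolding cpow_ik_def by simp

lemma cpow_ik_nz: "cpow_ik \<kappa> u0 t \<noteq> 0"
  unfolding cpow_ik_def by simp

lemma cpow_ik_deriv:
  assumes "u0 < t"
  shows "(cpow_ik \<kappa> u0 has_vector_derivative (\<i> * of_real \<kappa> / of_real (t - u0)) * cpow_ik \<kappa> u0 t) (at t)"
proof -
  have "((\<lambda>t. \<kappa> * ln (t - u0)) has_real_derivative \<kappa> * (1 / (t - u0))) (at t)"
    using assms by (auto intro!: derivative_eq_intros)
  then have 1: "((\<lambda>t. complex_of_real (\<kappa> * ln (t - u0))) has_vector_derivative of_real (\<kappa> * (1 / (t - u0)))) (at t)"
    by (rule has_vector_derivative_of_real)
  have 2: "((\<lambda>t. \<i> * complex_of_real (\<kappa> * ln (t - u0))) has_vector_derivative \<i> * of_real (\<kappa> * (1 / (t - u0)))) (at t)"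
    using bounded_linear.has_vector_derivative[OF bounded_linear_mult_right[of \<i>] 1] by simp
  have "((exp \<circ> (\<lambda>t. \<i> * complex_of_real (\<kappa> * ln (t - u0)))) has_vector_derivative
          (\<i> * of_real (\<kappa> * (1 / (t - u0)))) * exp (\<i> * complex_of_real (\<kappa> * ln (t - u0)))) (at t)"
    by (rule field_vector_diff_chain_at[OF 2]) (rule DERIV_exp)
  then show ?thesis unfolding cpow_ik_def o_def by (simp add: field_simps)
qed

lemma deriv_on_open:
  assumes "open Om" "\<And>w. w \<in> Om \<Longrightarrow> g w = e w" "\<And>w. w \<in> Om \<Longrightarrow> (e has_field_derivative e' w) (at w)"
    "w \<in> Om"
  shows "deriv g w = e' w"
proof -
  have "eventually (\<lambda>x. g x = e x) (nhds w)"
    using assms(1,2,4) by (auto simp: eventually_nhds intro!: exI[of _ Om])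
  then have "deriv g w = deriv e w" by (rule deriv_cong_ev) simp
  also have "\<dots> = e' w" using assms(3)[OF assms(4)] by (rule DERIV_imp_deriv)
  finally show ?thesis .
qed

lemma fzz_eq: "fzz f w t = deriv (deriv (\<lambda>w. f w t)) w"
  by (simp add: fzz_def numeral_2_eq_2)

lemma fzzz_eq: "fzzz f w t = deriv (deriv (deriv (\<lambda>w. f w t))) w"
  by (simp add: fzzz_def numeral_3_eq_3)

lemma phi_eq: "phi f w t = deriv (deriv (deriv (\<lambda>w. f w t))) w / fzz f w t"
proof -
  have "(\<lambda>w. fzz f w t) = deriv (deriv (\<lambda>w. f w t))" by (simp add: fzz_eq fun_eq_iff)
  then show ?thesis unfolding phi_def by simp
qed

lemma local_form_derivs:
  fixes F :: "complex \<Rightarrow> complex" and V :: "(complex \<times> real) set" and f :: "complex \<Rightarrow> real \<Rightarrow> complex"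
  assumes V: "open V" and Fh: "F holomorphic_on W" and W: "open W"
    and rep: "\<And>w t. (w, t) \<in> V \<Longrightarrow> w * c t - h t \<in> W \<and> f w t = F (w * c t - h t) / sq t + aa t * w + bb t"
    and wt: "(w, t) \<in> V"
  shows "deriv (\<lambda>w. f w t) w = c t * deriv F (w * c t - h t) / sq t + aa t"
    and "deriv (deriv (\<lambda>w. f w t)) w = c t ^ 2 * deriv (deriv F) (w * c t - h t) / sq t"
    and "deriv (deriv (deriv (\<lambda>w. f w t))) w = c t ^ 3 * deriv (deriv (deriv F)) (w * c t - h t) / sq t"
proof -
  define Om where "Om = {w. (w, t) \<in> V}"
  have Om: "open Om" unfolding Om_def using V by (rule open_slice)
  have wO: "w \<in> Om" using wt Om_def by simp
  have inW: "x * c t - h t \<in> W" if "x \<in> Om" for x using rep that Om_def by auto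
  have F1h: "deriv F holomorphic_on W" using holomorphic_deriv[OF Fh W] .
  have F2h: "deriv (deriv F) holomorphic_on W" using holomorphic_deriv[OF F1h W] .
  have F3h: "deriv (deriv (deriv F)) holomorphic_on W" using holomorphic_deriv[OF F2h W] .
  have chain: "((\<lambda>x. G (x * c t - h t)) has_field_derivative c t * deriv G (x * c t - h t)) (at x)"
    if "G holomorphic_on W" "x \<in> Om" for G x
  proof -
    have "(G has_field_derivative deriv G (x * c t - h t)) (at (x * c t - h t))"
      using holomorphic_derivI[OF that(1) W inW[OF that(2)]] by simp
    moreover have "((\<lambda>x. x * c t - h t) has_field_derivative c t) (at x)"
      by (auto intro!: derivative_eq_intros)
    ultimately have "((\<lambda>x. G (x * c t - h t)) has_field_derivative deriv G (x * c t - h t) * c t) (at x)"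
      by (rule DERIV_chain2)
    then show ?thesis by (simp add: mult.commute)
  qed
  have d1: "deriv (\<lambda>w. f w t) x = c t * deriv F (x * c t - h t) / sq t + aa t" if "x \<in> Om" for x
  proof (rule deriv_on_open[OF Om _ _ that, of _ "\<lambda>x. F (x * c t - h t) / sq t + aa t * x + bb t"])
    show "f w' t = F (w' * c t - h t) / sq t + aa t * w' + bb t" if "w' \<in> Om" for w'
      using rep that Om_def by auto
    fix x assume "x \<in> Om"
    show "((\<lambda>x. F (x * c t - h t) / sq t + aa t * x + bb t) has_field_derivative
       c t * deriv F (x * c t - h t) / sq t + aa t) (at x)"
    proof -
      have a: "((\<lambda>x. F (x * c t - h t) / sq t) has_field_derivative c t * deriv F (x * c t - h t) / sq t) (at x)"
        by (rule DERIV_cdivide[OF chain[OF Fh \<open>x \<in> Om\<close>]])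
      have b: "((\<lambda>x. aa t * x + bb t) has_field_derivative aa t) (at x)"
        by (auto intro!: derivative_eq_intros)
      from DERIV_add[OF a b] show ?thesis by (simp add: add.assoc)
    qed
  qed
  have d2: "deriv (deriv (\<lambda>w. f w t)) x = c t ^ 2 * deriv (deriv F) (x * c t - h t) / sq t" if "x \<in> Om" for x
  proof (rule deriv_on_open[OF Om d1 _ that])
    fix x assume "x \<in> Om"
    show "((\<lambda>x. c t * deriv F (x * c t - h t) / sq t + aa t) has_field_derivative
       c t ^ 2 * deriv (deriv F) (x * c t - h t) / sq t) (at x)"
    proof -
      have a: "((\<lambda>x. c t * deriv F (x * c t - h t) / sq t) has_field_derivative c t * (c t * deriv (deriv F) (x * c t - h t)) / sq t) (at x)"
        by (rule DERIV_cdivide[OF DERIV_cmult[OF chain[OF F1h \<open>x \<in> Om\<close>]]])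
      from DERIV_add[OF a DERIV_const[of "aa t"]] show ?thesis by (simp add: power2_eq_square mult.assoc)
    qed
  qed
  have d3: "deriv (deriv (deriv (\<lambda>w. f w t))) x = c t ^ 3 * deriv (deriv (deriv F)) (x * c t - h t) / sq t" if "x \<in> Om" for x
  proof (rule deriv_on_open[OF Om d2 _ that])
    fix x assume "x \<in> Om"
    show "((\<lambda>x. c t ^ 2 * deriv (deriv F) (x * c t - h t) / sq t) has_field_derivative
       c t ^ 3 * deriv (deriv (deriv F)) (x * c t - h t) / sq t) (at x)"
      using DERIV_cdivide[OF DERIV_cmult[OF chain[OF F2h \<open>x \<in> Om\<close>], of "c t ^ 2"], of "sq t"]
      by (simp add: power2_eq_square power3_eq_cube mult.assoc)
  qed
  show "deriv (\<lambda>w. f w t) w = c t * deriv F (w * c t - h t) / sq t + aa t" using d1 wO .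
  show "deriv (deriv (\<lambda>w. f w t)) w = c t ^ 2 * deriv (deriv F) (w * c t - h t) / sq t" using d2 wO .
  show "deriv (deriv (deriv (\<lambda>w. f w t))) w = c t ^ 3 * deriv (deriv (deriv F)) (w * c t - h t) / sq t" using d3 wO .
qed

lemma alg:
  fixes c pp qq d k w gg :: complex
  assumes "c \<noteq> 0" "pp \<noteq> 0" "qq \<noteq> 0" "d \<noteq> 0"
  shows "d * ((c * c * pp * (- (inverse (d^2) * (2 * d) * inverse (d^2)))
        + (c * c * ((w * ((\<i> * k / d) * c) - gg) * qq)
        + (c * ((\<i> * k / d) * c) + ((\<i> * k / d) * c) * c) * pp) * inverse (d^2))
        / (c * c * pp * inverse (d^2))) / (c * qq / pp)
   = (2 * \<i> * k - 2) * pp / (c * qq) + \<i> * k * w - d * gg / c"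
  using assms by (simp add: field_simps power2_eq_square)

lemma backward_pt:
  fixes \<kappa> u0 :: real and f :: "complex \<Rightarrow> real \<Rightarrow> complex" and V U :: "(complex \<times> real) set"
    and F h A1 A0 :: _ and W :: "complex set" and I :: "real set"
  assumes V: "open V" "(z, u) \<in> V" "V \<subseteq> U" and U_sub: "U \<subseteq> {(z, u). u > u0}"
    and f_zz: "\<forall>(z, u)\<in>U. fzz f z u \<noteq> 0"
    and W: "open W" "F holomorphic_on W" "\<forall>w\<in>W. (deriv ^^ 3) F w \<noteq> 0"
    and I: "open I" "snd ` V \<subseteq> I" "smooth_on I (h :: real \<Rightarrow> complex)"
    and rep: "\<forall>(z, u)\<in>V. z * cpow_ik \<kappa> u0 u - h u \<in> W \<and>
              f z u = F (z * cpow_ik \<kappa> u0 u - h u) / of_real ((u - u0)^2) + A1 u * z + A0 u"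
  shows "deriv (\<lambda>w. of_real (u - u0) * psi f w u / phi f w u) z
       = deriv (\<lambda>w. (2 * \<i> * of_real \<kappa> - 2) / phi f w u) z + \<i> * of_real \<kappa>"
proof -
  define c where "c = cpow_ik \<kappa> u0"
  define S2 where "S2 t = complex_of_real ((t - u0)^2)" for t
  define F1 where "F1 = deriv F"
  define F2 where "F2 = deriv F1"
  define F3 where "F3 = deriv F2"
  have rep': "\<And>w t. (w, t) \<in> V \<Longrightarrow> w * c t - h t \<in> W \<and> f w t = F (w * c t - h t) / S2 t + A1 t * w + A0 t"
    using rep unfolding c_def S2_def by auto
  have LF2: "deriv (deriv (\<lambda>w. f w t)) w = c t ^ 2 * deriv (deriv F) (w * c t - h t) / S2 t"
    if "(w, t) \<in> V" for w t
    by (rule local_form_derivs(2)[where c=c and h=h and sq=S2 and aa=A1 and bb=A0 and f=f and F=F and W=W and V=V])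
       (use V(1) W rep' that in auto)
  have LF3: "deriv (deriv (deriv (\<lambda>w. f w t))) w = c t ^ 3 * deriv (deriv (deriv F)) (w * c t - h t) / S2 t"
    if "(w, t) \<in> V" for w t
    by (rule local_form_derivs(3)[where c=c and h=h and sq=S2 and aa=A1 and bb=A0 and f=f and F=F and W=W and V=V])
       (use V(1) W rep' that in auto)
  have F3nz: "F3 \<xi> \<noteq> 0" if "\<xi> \<in> W" for \<xi> using W(3) that by (simp add: F3_def F2_def F1_def numeral_3_eq_3)
  have F2h: "F2 holomorphic_on W" unfolding F2_def F1_def by (intro holomorphic_deriv W)
  have F3h: "F3 holomorphic_on W" unfolding F3_def using F2h by (intro holomorphic_deriv W)
  have cnz: "c t \<noteq> 0" for t by (simp add: c_def cpow_ik_nz)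
  have gt: "t > u0" if "(w, t) \<in> V" for w t using that V(3) U_sub by auto
  have S2nz: "S2 t \<noteq> 0" if "(w, t) \<in> V" for w t using gt[OF that] by (simp add: S2_def)
  have fzzV: "fzz f w t = c t ^ 2 * F2 (w * c t - h t) / S2 t" if "(w, t) \<in> V" for w t
    using LF2[OF that] by (simp add: fzz_eq F2_def F1_def)
  have fzzzV: "deriv (deriv (deriv (\<lambda>w. f w t))) w = c t ^ 3 * F3 (w * c t - h t) / S2 t" if "(w, t) \<in> V" for w t
    using LF3[OF that] by (simp add: F3_def F2_def F1_def)
  have F2nz: "F2 (w * c t - h t) \<noteq> 0" if "(w, t) \<in> V" for w t
  proof
    assume "F2 (w * c t - h t) = 0"
    then have "fzz f w t = 0" using fzzV[OF that] by simp
    moreover have "(w, t) \<in> U" using that V(3) by blast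
    ultimately show False using f_zz by blast
  qed
  have inW: "w * c t - h t \<in> W" if "(w, t) \<in> V" for w t using rep' that by blast
  have phiV: "phi f w t = c t * F3 (w * c t - h t) / F2 (w * c t - h t)" if "(w, t) \<in> V" for w t
    using phi_eq[of f w t] fzzV[OF that] fzzzV[OF that] S2nz[OF that] F2nz[OF that] cnz[of t]
    by (simp add: field_simps power2_eq_square power3_eq_cube)
  have uI: "u \<in> I" using V(2) I(2) by force
  have "iter_dderiv h [] differentiable (at u)" using I(3) uI unfolding smooth_on_def by blast
  then have hd: "(h has_vector_derivative vector_derivative h (at u)) (at u)"
    by (simp add: vector_derivative_works)
  define h' where "h' = vector_derivative h (at u)"
  have u0u: "u0 < u" using gt[OF V(2)] .
  have cd: "(c has_vector_derivative (\<i> * of_real \<kappa> / of_real (u - u0)) * c u) (at u)"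
    unfolding c_def by (rule cpow_ik_deriv[OF u0u])
  define Om where "Om = {w. (w, u) \<in> V}"
  have Om: "open Om" unfolding Om_def using V(1) by (rule open_slice)
  have zO: "z \<in> Om" using V(2) Om_def by simp
  define R where "R w = (2 * \<i> * of_real \<kappa> - 2) * F2 (w * c u - h u) / (c u * F3 (w * c u - h u))" for w
  define Kc where "Kc = of_real (u - u0) * h' / c u"
  have psiV: "of_real (u - u0) * psi f w u / phi f w u = R w + \<i> * of_real \<kappa> * w - Kc" if w: "w \<in> Om" for w
  proof -
    have wu: "(w, u) \<in> V" using w Om_def by simp
    define T where "T = {t. (w, t) \<in> V}"
    have T: "open T" unfolding T_def
    proof -
      have "{t. (w, t) \<in> V} = (\<lambda>t. (w, t)) -` V" by auto
      moreover have "continuous_on UNIV (\<lambda>t::real. (w, t))" by (intro continuous_intros)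
      ultimately show "open {t. (w, t) \<in> V}" using open_vimage[OF V(1), of "\<lambda>t::real. (w, t)"] by simp
    qed
    have uT: "u \<in> T" using wu T_def by simp
    define \<xi> where "\<xi> t = w * c t - h t" for t
    have \<xi>d: "(\<xi> has_vector_derivative w * ((\<i> * of_real \<kappa> / of_real (u - u0)) * c u) - h') (at u)"
      unfolding \<xi>_def h'_def
      by (intro has_vector_derivative_diff has_vector_derivative_mult_right cd hd)
    have F2d: "(F2 has_field_derivative F3 (\<xi> u)) (at (\<xi> u))"
      unfolding F3_def using holomorphic_derivI[OF F2h W(1) inW[OF wu]] by (simp add: \<xi>_def)
    have d1: "((\<lambda>t. F2 (\<xi> t)) has_vector_derivative
        (w * ((\<i> * of_real \<kappa> / of_real (u - u0)) * c u) - h') * F3 (\<xi> u)) (at u)"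
      using field_vector_diff_chain_at[OF \<xi>d F2d] by (simp add: o_def)
    have d2: "((\<lambda>t. c t * c t) has_vector_derivative
        c u * ((\<i> * of_real \<kappa> / of_real (u - u0)) * c u) + ((\<i> * of_real \<kappa> / of_real (u - u0)) * c u) * c u) (at u)"
      by (rule has_vector_derivative_mult[OF cd cd])
    have "((\<lambda>t. inverse ((t - u0)^2)) has_real_derivative
        - (inverse ((u - u0)^2) * (2 * (u - u0)) * inverse ((u - u0)^2))) (at u)"
      using u0u by (auto intro!: derivative_eq_intros)
    then have d3: "((\<lambda>t. complex_of_real (inverse ((t - u0)^2))) has_vector_derivative
        of_real (- (inverse ((u - u0)^2) * (2 * (u - u0)) * inverse ((u - u0)^2)))) (at u)"
      by (rule has_vector_derivative_of_real)
    define E where "E t = (c t * c t) * F2 (\<xi> t) * complex_of_real (inverse ((t - u0)^2))" for t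
    define Epr where "Epr = ((c u * c u) * F2 (\<xi> u) * of_real (- (inverse ((u - u0)^2) * (2 * (u - u0)) * inverse ((u - u0)^2)))
        + ((c u * c u) * ((w * ((\<i> * of_real \<kappa> / of_real (u - u0)) * c u) - h') * F3 (\<xi> u))
        + (c u * ((\<i> * of_real \<kappa> / of_real (u - u0)) * c u) + ((\<i> * of_real \<kappa> / of_real (u - u0)) * c u) * c u) * F2 (\<xi> u))
        * complex_of_real (inverse ((u - u0)^2)))"
    have Ed: "(E has_vector_derivative Epr) (at u)"
      unfolding E_def Epr_def by (intro has_vector_derivative_mult d1 d2 d3)
    have EfT: "fzz f w t = E t" if "t \<in> T" for t
      using fzzV[of w t] that T_def by (simp add: E_def \<xi>_def S2_def power2_eq_square divide_inverse)
    have "((\<lambda>t. fzz f w t) has_vector_derivative Epr) (at u)"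
      by (rule has_vector_derivative_transform_within_open[OF Ed T uT]) (use EfT in simp)
    then have psiw: "psi f w u = Epr / fzz f w u"
      unfolding psi_def by (simp add: vector_derivative_at)
    have fz: "fzz f w u = c u * c u * F2 (\<xi> u) * complex_of_real (inverse ((u - u0)^2))"
      using EfT[OF uT] E_def by simp
    have ph: "phi f w u = c u * F3 (\<xi> u) / F2 (\<xi> u)" using phiV[OF wu] \<xi>_def by simp
    have nz: "c u \<noteq> 0" "F2 (\<xi> u) \<noteq> 0" "F3 (\<xi> u) \<noteq> 0" "complex_of_real (u - u0) \<noteq> 0"
      using cnz F2nz[OF wu] F3nz[OF inW[OF wu]] u0u by (auto simp: \<xi>_def)
    define d where "d = complex_of_real (u - u0)"
    have e1: "complex_of_real (inverse ((u - u0)^2)) = inverse (d^2)" by (simp add: d_def)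
    have e2: "complex_of_real (- (inverse ((u - u0)^2) * (2 * (u - u0)) * inverse ((u - u0)^2)))
       = - (inverse (d^2) * (2 * d) * inverse (d^2))" by (simp add: d_def)
    have dnz: "d \<noteq> 0" using nz(4) d_def by simp
    have "\<xi> u = w * c u - h u" by (simp add: \<xi>_def)
    then show ?thesis
      unfolding psiw fz ph R_def Kc_def Epr_def e1 e2 d_def[symmetric]
      using alg[where c="c u" and pp="F2 (\<xi> u)" and qq="F3 (\<xi> u)" and d=d and k="of_real \<kappa>" and w=w and gg=h'] nz(1-3) dnz
      by simp
  qed
  have phiR: "(2 * \<i> * of_real \<kappa> - 2) / phi f w u = R w" if w: "w \<in> Om" for w
  proof -
    have wu: "(w, u) \<in> V" using w Om_def by simp
    show ?thesis unfolding phiV[OF wu] R_def using F2nz[OF wu] cnz[of u] F3nz[OF inW[OF wu]]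
      by (simp add: field_simps)
  qed
  have Rd: "R field_differentiable at z"
  proof -
    have aff: "(\<lambda>w. w * c u - h u) field_differentiable at z" by (auto intro!: derivative_intros)
    have "F2 field_differentiable at (z * c u - h u)"
      using F2h W(1) inW[OF V(2)] holomorphic_on_imp_differentiable_at by blast
    then have a: "(\<lambda>w. F2 (w * c u - h u)) field_differentiable at z"
      using field_differentiable_compose[OF aff] by (simp add: o_def)
    have "F3 field_differentiable at (z * c u - h u)"
      using F3h W(1) inW[OF V(2)] holomorphic_on_imp_differentiable_at by blast
    then have b: "(\<lambda>w. F3 (w * c u - h u)) field_differentiable at z"
      using field_differentiable_compose[OF aff] by (simp add: o_def)
    show ?thesis unfolding R_def
      using a b cnz[of u] F3nz[OF inW[OF V(2)]]
      by (intro field_differentiable_divide field_differentiable_mult field_differentiable_const) auto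
  qed
  have ev1: "eventually (\<lambda>w. of_real (u - u0) * psi f w u / phi f w u = R w + \<i> * of_real \<kappa> * w - Kc) (nhds z)"
    using Om zO psiV by (auto simp: eventually_nhds intro!: exI[of _ Om])
  have ev2: "eventually (\<lambda>w. (2 * \<i> * of_real \<kappa> - 2) / phi f w u = R w) (nhds z)"
    using Om zO phiR by (auto simp: eventually_nhds intro!: exI[of _ Om])
  have "deriv (\<lambda>w. of_real (u - u0) * psi f w u / phi f w u) z = deriv (\<lambda>w. R w + \<i> * of_real \<kappa> * w - Kc) z"
    by (rule deriv_cong_ev[OF ev1 refl])
  also have "\<dots> = deriv R z + \<i> * of_real \<kappa>"
  proof (rule DERIV_imp_deriv)
    have "(R has_field_derivative deriv R z) (at z)" using Rd by (simp add: DERIV_deriv_iff_field_differentiable)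
    then show "((\<lambda>w. R w + \<i> * of_real \<kappa> * w - Kc) has_field_derivative deriv R z + \<i> * of_real \<kappa>) (at z)"
      by (auto intro!: derivative_eq_intros)
  qed
  also have "deriv R z = deriv (\<lambda>w. (2 * \<i> * of_real \<kappa> - 2) / phi f w u) z"
    by (rule deriv_cong_ev[OF ev2 refl, symmetric])
  finally show ?thesis .
qed




lemma alg2:
  fixes s c c0 g2 g3 P Z k :: complex and ka :: complex
  assumes "s \<noteq> 0" "c \<noteq> 0"
    and star: "s * P = (2 * \<i> * ka - 2) * g2 + (\<i> * ka * Z - c0) * g3"
    and kdef: "k = c * c0 / s"
  shows "(2 * s * g2 + s * s * (((k * c - c * Z * ((\<i> * ka / s) * c)) / (c * c)) * g3 + P)) / (c * c)
     - s * s * g2 * (2 * c * ((\<i> * ka / s) * c)) / (c * c * (c * c)) = 0"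
proof -
  have Pd: "P = ((2 * \<i> * ka - 2) * g2 + (\<i> * ka * Z - c0) * g3) / s" using star assms(1)
    by (simp add: field_simps)
  show ?thesis using assms(1,2) unfolding kdef Pd by (simp add: field_simps)
qed

lemma smooth1_cpow: "smooth1 {u0<..} (cpow_ik \<kappa> u0)"
proof -
  define T where "T = {z::complex. Re z > 0}"
  have T: "open T" unfolding T_def by (simp add: open_halfspace_Re_gt)
  have hol: "(\<lambda>z. exp (\<i> * of_real \<kappa> * Ln z)) holomorphic_on T"
    by (intro holomorphic_intros) (auto simp: T_def complex_nonpos_Reals_iff)
  have sm: "smooth1 {u0<..} (\<lambda>t. complex_of_real t - of_real u0)"
    by (intro smooth1_diff' smooth1_of_real smooth1_const) auto
  have "smooth1 {u0<..} (\<lambda>t. exp (\<i> * of_real \<kappa> * Ln (complex_of_real t - of_real u0)))"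
    by (rule smooth1_holo[OF _ T hol _ sm]) (auto simp: T_def)
  then show ?thesis
  proof (rule smooth1_cong[rotated 2])
    fix t :: real assume "t \<in> {u0<..}"
    then have "Ln (complex_of_real t - of_real u0) = of_real (ln (t - u0))"
      using Ln_of_real[of "t - u0"] by simp
    then show "exp (\<i> * of_real \<kappa> * Ln (complex_of_real t - of_real u0)) = cpow_ik \<kappa> u0 t"
      by (simp add: cpow_ik_def mult.assoc)
  qed simp
qed

lemma alg3:
  fixes s ic ka c0 Z X g2 g3 P k :: complex
  assumes "s \<noteq> 0" "ic \<noteq> 0" and star: "s * P = (2 * \<i> * ka - 2) * g2 + (\<i> * ka * Z - c0) * g3"
    and XZ: "X * ic = Z" and kdef: "k * ic = c0 / s"
  shows "s * s * (g2 * (ic * ((\<i> * (- ka) / s) * ic) + ((\<i> * (- ka) / s) * ic) * ic)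
      + ((X * ((\<i> * (- ka) / s) * ic) + k * ic) * g3 + P) * (ic * ic)) + 2 * s * (g2 * (ic * ic)) = 0"
proof -
  have Pd: "P = ((2 * \<i> * ka - 2) * g2 + (\<i> * ka * Z - c0) * g3) / s" using star assms(1)
    by (simp add: field_simps)
  have kd: "k = c0 / (s * ic)" using kdef assms(1,2) by (simp add: field_simps)
  have Xd: "X = Z / ic" using XZ assms(2) by (simp add: field_simps)
  show ?thesis unfolding Pd kd Xd using assms(1,2) by (simp add: field_simps)
qed

lemma forward_pt:
  fixes \<kappa> u0 :: real and f :: "complex \<Rightarrow> real \<Rightarrow> complex" and U :: "(complex \<times> real) set"
  assumes U_open: "open U"
    and U_sub: "U \<subseteq> {(z, u). u > u0}"
    and f_smooth: "smooth_on U (\<lambda>p. f (fst p) (snd p))"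
    and f_hol: "\<forall>(z, u)\<in>U. (\<lambda>w. f w u) field_differentiable (at z)"
    and f_zz: "\<forall>(z, u)\<in>U. fzz f z u \<noteq> 0"
    and f_zzz: "\<forall>(z, u)\<in>U. fzzz f z u \<noteq> 0"
    and EQ: "\<forall>(z, u)\<in>U.
            deriv (\<lambda>w. of_real (u - u0) * psi f w u / phi f w u) z
          = deriv (\<lambda>w. (2 * \<i> * of_real \<kappa> - 2) / phi f w u) z + \<i> * of_real \<kappa>"
    and p0: "(z0, u1) \<in> U"
  shows "\<exists>V. open V \<and> (z0, u1) \<in> V \<and> V \<subseteq> U \<and>
        (\<exists>F h A1 A0 W I.
           open W \<and> F holomorphic_on W \<and> (\<forall>w\<in>W. (deriv ^^ 3) F w \<noteq> 0) \<and>
           open I \<and> snd ` V \<subseteq> I \<and>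
           smooth_on I (h :: real \<Rightarrow> complex) \<and> smooth_on I (A1 :: real \<Rightarrow> complex) \<and>
           smooth_on I (A0 :: real \<Rightarrow> complex) \<and>
           (\<forall>(z, u)\<in>V. z * cpow_ik \<kappa> u0 u - h u \<in> W \<and>
              f z u = F (z * cpow_ik \<kappa> u0 u - h u) / of_real ((u - u0)^2)
                      + A1 u * z + A0 u))"
proof -
  define G where "G p = f (fst p) (snd p)" for p
  have SMG: "SM U G" using smooth_on_SM f_smooth unfolding G_def by blast
  have shG: "slicehol U G" unfolding slicehol_def G_def using f_hol by auto
  have HSG: "HS U G" using SMG shG HS_def by blast
  define G1 where "G1 = pz G"
  define G2 where "G2 = pz G1"
  define G3 where "G3 = pz G2"
  define P where "P = pu G2"
  have HS1: "HS U G1" unfolding G1_def by (rule HS_pz[OF U_open HSG])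
  have HS2: "HS U G2" unfolding G2_def by (rule HS_pz[OF U_open HS1])
  have HS3: "HS U G3" unfolding G3_def by (rule HS_pz[OF U_open HS2])
  have HSP: "SM U P \<and> slicehol U P" unfolding P_def by (rule HS_pu[OF U_open HS2])
  have G1e: "(\<lambda>w. G1 (w, t)) = deriv (\<lambda>w. f w t)" for t
    by (simp add: G1_def G_def pz_def fun_eq_iff)
  have G2e: "(\<lambda>w. G2 (w, t)) = (\<lambda>w. fzz f w t)" for t
    using G1e[of t] by (simp add: G2_def pz_def fzz_eq fun_eq_iff)
  have G3e: "(\<lambda>w. G3 (w, t)) = deriv (\<lambda>w. fzz f w t)" for t
    using G2e[of t] by (simp add: G3_def pz_def fun_eq_iff)
  have fzzG: "fzz f w t = G2 (w, t)" for w t using fun_cong[OF G2e[of t], of w] by simp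
  have phiG: "phi f w t = G3 (w, t) / G2 (w, t)" for w t
  proof -
    have a: "deriv (\<lambda>w. fzz f w t) w = G3 (w, t)" using fun_cong[OF G3e[of t], of w] by simp
    show ?thesis unfolding phi_def a by (simp only: fzzG)
  qed
  have psiG: "psi f w t = P (w, t) / G2 (w, t)" for w t
    unfolding psi_def P_def pu_def fzzG by simp
  have G2nz: "G2 q \<noteq> 0" if "q \<in> U" for q using f_zz that fzzG by (cases q) auto
  have G3nz: "G3 q \<noteq> 0" if "q \<in> U" for q
  proof -
    obtain w t where q: "q = (w, t)" by (cases q)
    have "fzzz f w t = deriv (\<lambda>w. fzz f w t) w" by (simp add: fzzz_eq fzz_eq)
    also have "\<dots> = G3 (w, t)" using fun_cong[OF G3e[of t], of w] by simp
    finally show ?thesis using f_zzz that q by auto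
  qed
  have sdiff: "(\<lambda>w. K (w, t)) field_differentiable at w" if "slicehol U K" "(w, t) \<in> U" for K w t
    using that unfolding slicehol_def by force
  obtain e0 where e0: "e0 > 0" "ball (z0, u1) e0 \<subseteq> U" using U_open p0 open_contains_ball by blast
  define R where "R = e0 / 2"
  have R: "R > 0" using e0 R_def by simp
  define J where "J = ball u1 R"
  have BU: "(w, t) \<in> U" if "w \<in> ball z0 R" "t \<in> J" for w t
  proof -
    have "dist (z0, u1) (w, t) = sqrt ((dist z0 w)\<^sup>2 + (dist u1 t)\<^sup>2)" by (rule dist_Pair_Pair)
    also have "\<dots> \<le> \<bar>dist z0 w\<bar> + \<bar>dist u1 t\<bar>" by (rule sqrt_sum_squares_le_sum_abs)
    also have "\<dots> < R + R" using that J_def by (auto intro: add_strict_mono)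
    finally have "(w, t) \<in> ball (z0, u1) e0" using R_def by simp
    then show ?thesis using e0 by blast
  qed
  have Jgt: "t > u0" if "t \<in> J" for t using BU[of z0 t] that R U_sub by auto
  define Hq where "Hq w t = (of_real (t - u0) * P (w, t) - (2 * \<i> * of_real \<kappa> - 2) * G2 (w, t)) / G3 (w, t)
      - \<i> * of_real \<kappa> * w" for w t
  have Hconst: "Hq w t = Hq z0 t" if w: "w \<in> ball z0 R" and t: "t \<in> J" for w t
  proof -
    define Lf where "Lf w = of_real (t - u0) * psi f w t / phi f w t" for w
    define Rf where "Rf w = (2 * \<i> * of_real \<kappa> - 2) / phi f w t" for w
    have HL: "Hq x t = Lf x - Rf x - \<i> * of_real \<kappa> * x" if "x \<in> ball z0 R" for x
      using G2nz[OF BU[OF that t]] G3nz[OF BU[OF that t]]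
      unfolding Hq_def Lf_def Rf_def phiG psiG by (simp add: field_simps)
    have "\<exists>C. \<forall>x\<in>ball z0 R. Lf x - Rf x - \<i> * of_real \<kappa> * x = C"
    proof (rule has_field_derivative_zero_constant)
      fix x assume x: "x \<in> ball z0 R"
      have xu: "(x, t) \<in> U" by (rule BU[OF x t])
      have d2: "(\<lambda>w. G2 (w, t)) field_differentiable at x" using sdiff[OF _ xu] HS2 HS_def by blast
      have d3: "(\<lambda>w. G3 (w, t)) field_differentiable at x" using sdiff[OF _ xu] HS3 HS_def by blast
      have dP: "(\<lambda>w. P (w, t)) field_differentiable at x" using sdiff[OF _ xu] HSP by blast
      have nz: "G2 (x, t) \<noteq> 0" "G3 (x, t) \<noteq> 0" using G2nz[OF xu] G3nz[OF xu] by auto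
      have Ld: "Lf field_differentiable at x" unfolding Lf_def phiG psiG
        using d2 d3 dP nz by (intro field_differentiable_divide field_differentiable_mult field_differentiable_const) auto
      have Rd: "Rf field_differentiable at x" unfolding Rf_def phiG
        using d2 d3 nz by (intro field_differentiable_divide field_differentiable_const) auto
      have eq: "deriv Lf x = deriv Rf x + \<i> * of_real \<kappa>" using EQ xu unfolding Lf_def Rf_def by auto
      have "((\<lambda>x. Lf x - Rf x - \<i> * of_real \<kappa> * x) has_field_derivative deriv Lf x - deriv Rf x - \<i> * of_real \<kappa>) (at x)"
        using Ld Rd by (auto intro!: derivative_eq_intros simp: DERIV_deriv_iff_field_differentiable[symmetric])
      then show "((\<lambda>x. Lf x - Rf x - \<i> * of_real \<kappa> * x) has_field_derivative 0) (at x within ball z0 R)"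
        using eq by (auto intro: has_field_derivative_at_within)
    qed simp
    then obtain C where C: "\<And>x. x \<in> ball z0 R \<Longrightarrow> Lf x - Rf x - \<i> * of_real \<kappa> * x = C" by blast
    have "z0 \<in> ball z0 R" using R by simp
    then show ?thesis using HL[OF w] HL C[OF w] C by metis
  qed
  define c0 where "c0 t = - Hq z0 t" for t
  have star: "of_real (t - u0) * P (w, t) = (2 * \<i> * of_real \<kappa> - 2) * G2 (w, t) + (\<i> * of_real \<kappa> * w - c0 t) * G3 (w, t)"
    if w: "w \<in> ball z0 R" and t: "t \<in> J" for w t
  proof -
    have "Hq w t = - c0 t" using Hconst[OF w t] c0_def by simp
    then show ?thesis using G3nz[OF BU[OF w t]] unfolding Hq_def by (simp add: field_simps)
  qed
  have Jopen: "open J" unfolding J_def by simp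
  have SMs: "SM U G" "SM U G1" "SM U G2" "SM U G3" "SM U P"
    using SMG HS1 HS2 HS3 HSP HS_def by auto
  have z0R: "z0 \<in> ball z0 R" using R by simp
  have smc: "smooth1 J (\<lambda>t. K (z0, t))" if "SM U K" for K
    by (rule smooth1_curve[OF Jopen smooth1_const[OF Jopen] smooth1_id[OF Jopen] _ that]) (rule BU[OF z0R])
  have smcp: "smooth1 {u0<..} c'" if "c' = cpow_ik \<kappa> u0" for c' using smooth1_cpow that by simp
  define c where "c = cpow_ik \<kappa> u0"
  have cJ: "smooth1 J c" using smooth1_subset[OF smooth1_cpow] Jgt unfolding c_def by blast
  have cnz: "c t \<noteq> 0" for t by (simp add: c_def cpow_ik_nz)
  have cn1: "norm (c t) = 1" for t by (simp add: c_def cpow_ik_norm)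
  have sJ: "smooth1 J (\<lambda>t. complex_of_real (t - u0))"
    using smooth1_diff'[OF Jopen smooth1_of_real[OF Jopen] smooth1_const[OF Jopen, of "complex_of_real u0"]] by simp
  have snz: "complex_of_real (t - u0) \<noteq> 0" if "t \<in> J" for t using Jgt[OF that] by simp
  have c0J: "smooth1 J c0"
  proof -
    have "smooth1 J (\<lambda>t. - ((of_real (t - u0) * P (z0, t) - (2 * \<i> * of_real \<kappa> - 2) * G2 (z0, t)) / G3 (z0, t)
      - \<i> * of_real \<kappa> * z0))"
      using Jopen sJ smc[OF SMs(5)] smc[OF SMs(3)] smc[OF SMs(4)] G3nz[OF BU[OF z0R]]
      by (intro smooth1_linear[OF bounded_linear_minus[OF bounded_linear_ident]] smooth1_diff' smooth1_divide
          smooth1_mult smooth1_const) auto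
    then show ?thesis unfolding c0_def Hq_def by simp
  qed
  define k where "k t = c t * c0 t / of_real (t - u0)" for t
  have kJ: "smooth1 J k" unfolding k_def using Jopen cJ c0J sJ snz
    by (intro smooth1_divide smooth1_mult) auto
  define a where "a = u1 - R / 2"
  define b where "b = u1 + R / 2"
  define J2 where "J2 = {a<..<b}"
  have J2open: "open J2" unfolding J2_def by simp
  have abJ: "{a..b} \<subseteq> J" using R unfolding a_def b_def J_def by (auto simp: dist_real_def)
  have J2J: "J2 \<subseteq> J" using abJ J2_def by auto
  have u1J2: "u1 \<in> J2" using R unfolding J2_def a_def b_def by simp
  have kcont: "continuous_on {a..b} k"
  proof -
    have "continuous_on J k"
      using smooth1_diff[OF kJ]
      by (intro continuous_at_imp_continuous_on ballI has_vector_derivative_continuous) auto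
    then show ?thesis using continuous_on_subset abJ by blast
  qed
  define h where "h t = integral {a..t} k" for t
  have hd: "(h has_vector_derivative k x) (at x)" if x: "x \<in> J2" for x
  proof -
    have "(h has_vector_derivative k x) (at x within {a..b})"
      unfolding h_def using x J2_def by (intro integral_has_vector_derivative[OF kcont]) auto
    then have "(h has_vector_derivative k x) (at x within J2)"
      by (rule has_vector_derivative_within_subset) (auto simp: J2_def)
    then show ?thesis using at_within_open[OF x J2open] by simp
  qed
  have hJ2: "smooth1 J2 h" by (rule smooth1_SucI[OF J2open hd smooth1_subset[OF kJ J2J]])
  have cJ2: "smooth1 J2 c" using smooth1_subset[OF cJ J2J] .
  define \<xi>1 where "\<xi>1 = z0 * c u1 - h u1"
  define zs where "zs t = (\<xi>1 + h t) / c t" for t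
  have zsJ2: "smooth1 J2 zs" unfolding zs_def using J2open cJ2 hJ2 cnz
    by (intro smooth1_divide smooth1_add smooth1_const) auto
  have zs1: "zs u1 = z0" unfolding zs_def \<xi>1_def using cnz[of u1] by (simp add: field_simps)
  have "isCont zs u1" using smooth1_diff[OF zsJ2 u1J2] has_vector_derivative_continuous by blast
  then obtain d2 where d2: "d2 > 0" "\<And>t. dist t u1 < d2 \<Longrightarrow> dist (zs t) z0 < R / 2"
    using R zs1 unfolding continuous_at_eps_delta by (metis half_gt_zero)
  define \<delta> where "\<delta> = min d2 (R / 2)"
  have \<delta>: "\<delta> > 0" using d2 R \<delta>_def by simp
  define I where "I = ball u1 \<delta>"
  have Iopen: "open I" unfolding I_def by simp
  have IJ2: "I \<subseteq> J2"
  proof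
    fix x assume "x \<in> I"
    then have "\<bar>x - u1\<bar> < R / 2" unfolding I_def \<delta>_def by (simp add: dist_real_def abs_minus_commute)
    then have "- (R / 2) < x - u1 \<and> x - u1 < R / 2" by (simp only: abs_less_iff) auto
    then show "x \<in> J2" unfolding J2_def a_def b_def by auto
  qed
  have IJ: "I \<subseteq> J" using IJ2 J2J by blast
  have u1I: "u1 \<in> I" using \<delta> I_def by simp
  define r where "r = R / 2"
  have r: "r > 0" using R r_def by simp
  define W where "W = ball \<xi>1 r"
  define V where "V = {p. snd p \<in> I \<and> fst p * c (snd p) - h (snd p) \<in> W}"
  have hcont: "continuous_on I h"
    using smooth1_diff[OF hJ2] IJ2
    by (intro continuous_at_imp_continuous_on ballI has_vector_derivative_continuous) auto
  have ccont: "continuous_on I c"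
    using smooth1_diff[OF cJ2] IJ2
    by (intro continuous_at_imp_continuous_on ballI has_vector_derivative_continuous) auto
  have Vopen: "open V"
  proof -
    define gm where "gm p = fst p * c (snd p) - h (snd p)" for p :: "complex \<times> real"
    have cs: "continuous_on (UNIV \<times> I) (\<lambda>p. c (snd p))"
      by (rule continuous_on_compose2[OF ccont continuous_on_snd]) auto
    have hs: "continuous_on (UNIV \<times> I) (\<lambda>p. h (snd p))"
      by (rule continuous_on_compose2[OF hcont continuous_on_snd]) auto
    have "continuous_on (UNIV \<times> I) gm" unfolding gm_def
      by (intro continuous_on_diff continuous_on_mult continuous_on_fst cs hs continuous_on_id)
    moreover have "open (UNIV \<times> I)" using Iopen by (simp add: open_Times)
    ultimately have "open (gm -` W \<inter> (UNIV \<times> I))"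
      using continuous_on_open_vimage W_def by blast
    moreover have "V = gm -` W \<inter> (UNIV \<times> I)" unfolding V_def gm_def by auto
    ultimately show ?thesis by simp
  qed
  have p0V: "(z0, u1) \<in> V" unfolding V_def W_def \<xi>1_def using u1I r by simp
  have Vslice: "(\<zeta>, t) \<in> V \<longleftrightarrow> t \<in> I \<and> \<zeta> \<in> ball (zs t) r" for \<zeta> t
  proof -
    have "\<zeta> * c t - h t - \<xi>1 = c t * (\<zeta> - zs t)" unfolding zs_def using cnz[of t]
      by (simp add: field_simps)
    then have "norm (\<zeta> * c t - h t - \<xi>1) = norm (\<zeta> - zs t)" by (simp add: norm_mult cn1)
    then have "dist \<xi>1 (\<zeta> * c t - h t) = dist (zs t) \<zeta>"
      by (simp add: dist_norm norm_minus_commute)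
    then show ?thesis unfolding V_def W_def by auto
  qed
  have VB: "\<zeta> \<in> ball z0 R \<and> t \<in> J" if "(\<zeta>, t) \<in> V" for \<zeta> t
  proof -
    have t: "t \<in> I" and z: "dist (zs t) \<zeta> < r" using Vslice that by auto
    have "dist t u1 < d2" using t I_def \<delta>_def by (auto simp: dist_commute)
    then have "dist (zs t) z0 < R / 2" using d2 by blast
    moreover have "dist z0 \<zeta> \<le> dist z0 (zs t) + dist (zs t) \<zeta>" by (rule dist_triangle)
    ultimately have "dist z0 \<zeta> < R" using z r_def by (simp add: dist_commute)
    then show ?thesis using t IJ by auto
  qed
  have VU: "V \<subseteq> U" using VB BU by auto
  define ic where "ic = cpow_ik (- \<kappa>) u0"
  have cic: "c t * ic t = 1" for t
    unfolding c_def ic_def cpow_ik_def by (simp add: exp_add[symmetric])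
  have icnz: "ic t \<noteq> 0" for t by (simp add: ic_def cpow_ik_nz)
  define sq2 where "sq2 t = complex_of_real ((t - u0)^2)" for t
  define T where "T \<xi> = sq2 u1 * (G2 ((\<xi> + h u1) * ic u1, u1) * (ic u1 * ic u1))" for \<xi>
  have VU': "(\<zeta>, t) \<in> U" if "(\<zeta>, t) \<in> V" for \<zeta> t using VU that by blast
  have G2fd: "((\<lambda>w. G2 (w, t)) has_field_derivative G3 (w, t)) (at w)" if "(w, t) \<in> U" for w t
  proof -
    have "(\<lambda>w. G2 (w, t)) field_differentiable at w" using sdiff[OF _ that] HS2 HS_def by blast
    then show ?thesis unfolding G3_def pz_def by (simp add: DERIV_deriv_iff_field_differentiable)
  qed
  have inV1: "((\<xi> + h u1) * ic u1, u1) \<in> V" if "\<xi> \<in> W" for \<xi>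
  proof -
    have "((\<xi> + h u1) * ic u1) * c u1 - h u1 = \<xi>" using cic[of u1] by (simp add: field_simps)
    then show ?thesis unfolding V_def using that u1I by simp
  qed
  have Td: "(T has_field_derivative sq2 u1 * (ic u1 * G3 ((\<xi> + h u1) * ic u1, u1) * (ic u1 * ic u1))) (at \<xi>)"
    if "\<xi> \<in> W" for \<xi>
  proof -
    have "((\<lambda>\<xi>. (\<xi> + h u1) * ic u1) has_field_derivative ic u1) (at \<xi>)"
      by (auto intro!: derivative_eq_intros)
    from DERIV_chain2[OF G2fd[OF VU'[OF inV1[OF that]]] this]
    have "((\<lambda>\<xi>. G2 ((\<xi> + h u1) * ic u1, u1)) has_field_derivative G3 ((\<xi> + h u1) * ic u1, u1) * ic u1) (at \<xi>)" .
    from DERIV_cmult[OF DERIV_cmult_right[OF this, of "ic u1 * ic u1"], of "sq2 u1"]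
    show ?thesis unfolding T_def by (simp add: mult.commute mult.left_commute)
  qed
  have Wopen: "open W" unfolding W_def by simp
  have Thol: "T holomorphic_on W"
    unfolding holomorphic_on_def field_differentiable_def using Td
    by (metis has_field_derivative_at_within)
  have starV: "of_real (t - u0) * P (w, t) = (2 * \<i> * of_real \<kappa> - 2) * G2 (w, t) + (\<i> * of_real \<kappa> * w - c0 t) * G3 (w, t)"
    if "(w, t) \<in> V" for w t using star VB[OF that] by blast
  have transport: "sq2 t * (G2 (\<zeta>, t) * (ic t * ic t)) = T (\<zeta> * c t - h t)" if zt: "(\<zeta>, t) \<in> V" for \<zeta> t
  proof -
    define \<xi> where "\<xi> = \<zeta> * c t - h t"
    have \<xi>W: "\<xi> \<in> W" using zt V_def \<xi>_def by simp
    define Z where "Z \<tau> = (\<xi> + h \<tau>) * ic \<tau>" for \<tau>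
    define Q where "Q \<tau> = sq2 \<tau> * (G2 (Z \<tau>, \<tau>) * (ic \<tau> * ic \<tau>))" for \<tau>
    have ZV: "(Z \<tau>, \<tau>) \<in> V" if "\<tau> \<in> I" for \<tau>
    proof -
      have "Z \<tau> * c \<tau> - h \<tau> = \<xi>" unfolding Z_def using cic[of \<tau>] by (simp add: field_simps)
      then show ?thesis unfolding V_def using that \<xi>W by simp
    qed
    have Qd: "(Q has_vector_derivative 0) (at \<tau>)" if \<tau>: "\<tau> \<in> I" for \<tau>
    proof -
      have \<tau>J2: "\<tau> \<in> J2" using \<tau> IJ2 by blast
      have gt: "u0 < \<tau>" using Jgt IJ \<tau> by blast
      have ZU: "(Z \<tau>, \<tau>) \<in> U" using VU' ZV[OF \<tau>] by blast
      define icd where "icd = (\<i> * of_real (- \<kappa>) / of_real (\<tau> - u0)) * ic \<tau>"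
      have icD: "(ic has_vector_derivative icd) (at \<tau>)"
        unfolding ic_def icd_def by (rule cpow_ik_deriv[OF gt])
      define Zd where "Zd = (\<xi> + h \<tau>) * icd + k \<tau> * ic \<tau>"
      have ZD: "(Z has_vector_derivative Zd) (at \<tau>)" unfolding Z_def Zd_def
      proof (rule has_vector_derivative_mult[OF _ icD])
        show "((\<lambda>x. \<xi> + h x) has_vector_derivative k \<tau>) (at \<tau>)"
          using has_vector_derivative_add[OF has_vector_derivative_const hd[OF \<tau>J2]] by simp
      qed
      define L where "L = frechet_derivative G2 (at (Z \<tau>, \<tau>))"
      have hdG2: "(G2 has_derivative L) (at (Z \<tau>, \<tau>))" unfolding L_def using SM_hasderiv[OF SMs(3) ZU] .
      have "((\<lambda>t. G2 (Z t, t)) has_vector_derivative L (Zd, 1)) (at \<tau>)"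
        by (rule curve_chain[OF hdG2 ZD has_vector_derivative_id])
      moreover have "L (Zd, 1) = Zd * G3 (Z \<tau>, \<tau>) + P (Z \<tau>, \<tau>)"
      proof -
        have lin: "linear L" using has_derivative_linear[OF hdG2] .
        have "L (Zd, 1) = L (Zd, 0) + L (0, 1)" using linear_add[OF lin, of "(Zd, 0)" "(0, 1)"] by simp
        also have "L (Zd, 0) = Zd * G3 (Z \<tau>, \<tau>)"
          unfolding L_def G3_def using fd_z[OF SMs(3) ZU] HS2 HS_def by blast
        also have "L (0, 1) = P (Z \<tau>, \<tau>)"
          unfolding L_def P_def using fd_u(1)[OF SMs(3) ZU] by blast
        finally show ?thesis .
      qed
      ultimately have G2D: "((\<lambda>t. G2 (Z t, t)) has_vector_derivative Zd * G3 (Z \<tau>, \<tau>) + P (Z \<tau>, \<tau>)) (at \<tau>)"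
        by simp
      have sqD: "(sq2 has_vector_derivative complex_of_real (2 * (\<tau> - u0))) (at \<tau>)"
      proof -
        have "((\<lambda>t. (t - u0)^2) has_real_derivative 2 * (\<tau> - u0)) (at \<tau>)"
          by (auto intro!: derivative_eq_intros)
        then show ?thesis unfolding sq2_def by (rule has_vector_derivative_of_real)
      qed
      have QD: "(Q has_vector_derivative
          sq2 \<tau> * (G2 (Z \<tau>, \<tau>) * (ic \<tau> * icd + icd * ic \<tau>) + (Zd * G3 (Z \<tau>, \<tau>) + P (Z \<tau>, \<tau>)) * (ic \<tau> * ic \<tau>))
          + complex_of_real (2 * (\<tau> - u0)) * (G2 (Z \<tau>, \<tau>) * (ic \<tau> * ic \<tau>))) (at \<tau>)"
        unfolding Q_def by (intro has_vector_derivative_mult sqD G2D icD)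
      have zero: "sq2 \<tau> * (G2 (Z \<tau>, \<tau>) * (ic \<tau> * icd + icd * ic \<tau>) + (Zd * G3 (Z \<tau>, \<tau>) + P (Z \<tau>, \<tau>)) * (ic \<tau> * ic \<tau>))
          + complex_of_real (2 * (\<tau> - u0)) * (G2 (Z \<tau>, \<tau>) * (ic \<tau> * ic \<tau>)) = 0"
      proof -
        define s where "s = complex_of_real (\<tau> - u0)"
        have s: "s \<noteq> 0" using gt s_def by simp
        have e1: "sq2 \<tau> = s * s" unfolding sq2_def s_def by (simp add: power2_eq_square)
        have e2: "complex_of_real (2 * (\<tau> - u0)) = 2 * s" unfolding s_def by simp
        have XZ: "(\<xi> + h \<tau>) * ic \<tau> = Z \<tau>" unfolding Z_def ..
        have kd: "k \<tau> * ic \<tau> = c0 \<tau> / s" unfolding k_def s_def using cic[of \<tau>] by (simp add: field_simps)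
        have st: "s * P (Z \<tau>, \<tau>) = (2 * \<i> * of_real \<kappa> - 2) * G2 (Z \<tau>, \<tau>) + (\<i> * of_real \<kappa> * Z \<tau> - c0 \<tau>) * G3 (Z \<tau>, \<tau>)"
          unfolding s_def using starV[OF ZV[OF \<tau>]] .
        show ?thesis unfolding e1 e2 Zd_def icd_def s_def[symmetric]
          using alg3[OF s icnz st XZ kd] by simp
      qed
      show ?thesis using QD zero by simp
    qed
    have "\<exists>C. \<forall>x\<in>I. Q x = C"
    proof (rule has_derivative_zero_constant)
      show "convex I" unfolding I_def by simp
      fix x assume "x \<in> I"
      then have "(Q has_derivative (\<lambda>h. h *\<^sub>R 0)) (at x)" using Qd unfolding has_vector_derivative_def by blast
      then show "(Q has_derivative (\<lambda>h. 0)) (at x within I)" by (simp add: has_derivative_at_withinI)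
    qed
    then obtain C where C: "\<And>x. x \<in> I \<Longrightarrow> Q x = C" by blast
    have tI: "t \<in> I" using zt V_def by simp
    have "Z t = \<zeta>" unfolding Z_def \<xi>_def using cic[of t] by (simp add: field_simps)
    then have "Q t = sq2 t * (G2 (\<zeta>, t) * (ic t * ic t))" unfolding Q_def by simp
    moreover have "Q u1 = T \<xi>" unfolding Q_def T_def Z_def ..
    ultimately show ?thesis using C[OF tI] C[OF u1I] \<xi>_def by simp
  qed
  obtain F1 where F1: "\<And>x. x \<in> W \<Longrightarrow> (F1 has_field_derivative T x) (at x within W)"
    using holomorphic_convex_primitive'[OF _ Wopen Thol] W_def by auto
  have F1d: "(F1 has_field_derivative T x) (at x)" if "x \<in> W" for x
    using F1[OF that] at_within_open[OF that Wopen] by simp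
  have F1hol: "F1 holomorphic_on W"
    unfolding holomorphic_on_def field_differentiable_def using F1 by blast
  obtain F where F: "\<And>x. x \<in> W \<Longrightarrow> (F has_field_derivative F1 x) (at x within W)"
    using holomorphic_convex_primitive'[OF _ Wopen F1hol] W_def by auto
  have Fd: "(F has_field_derivative F1 x) (at x)" if "x \<in> W" for x
    using F[OF that] at_within_open[OF that Wopen] by simp
  have Fhol: "F holomorphic_on W"
    unfolding holomorphic_on_def field_differentiable_def using F by blast
  have dF: "deriv F x = F1 x" if "x \<in> W" for x using DERIV_imp_deriv[OF Fd[OF that]] .
  have ddF: "deriv (deriv F) x = T x" if "x \<in> W" for x
    by (rule deriv_on_open[OF Wopen dF F1d that])
  have dddF: "deriv (deriv (deriv F)) x = sq2 u1 * (ic u1 * G3 ((x + h u1) * ic u1, u1) * (ic u1 * ic u1))"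
    if "x \<in> W" for x
    by (rule deriv_on_open[OF Wopen ddF Td that])
  have sq2nz: "sq2 t \<noteq> 0" if "t \<in> J" for t using Jgt[OF that] by (simp add: sq2_def)
  have u1J: "u1 \<in> J" using u1I IJ by blast
  have F3nz: "(deriv ^^ 3) F x \<noteq> 0" if "x \<in> W" for x
  proof -
    have "(deriv ^^ 3) F x = deriv (deriv (deriv F)) x" by (simp add: numeral_3_eq_3)
    also have "\<dots> \<noteq> 0" unfolding dddF[OF that]
      using sq2nz[OF u1J] icnz[of u1] G3nz[OF VU'[OF inV1[OF that]]] by simp
    finally show ?thesis .
  qed
  define A1 where "A1 t = G1 (zs t, t) - c t * F1 \<xi>1 / sq2 t" for t
  define A0 where "A0 t = G (zs t, t) - F \<xi>1 / sq2 t - A1 t * zs t" for t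
  have zsV: "(zs t, t) \<in> V" if "t \<in> I" for t using Vslice that r by simp
  have zsxi: "zs t * c t - h t = \<xi>1" for t unfolding zs_def using cnz[of t] by (simp add: field_simps)
  have repr: "f \<zeta> t = F (\<zeta> * c t - h t) / sq2 t + A1 t * \<zeta> + A0 t" if zt: "(\<zeta>, t) \<in> V" for \<zeta> t
  proof -
    have tI: "t \<in> I" using zt V_def by simp
    define Om where "Om = ball (zs t) r"
    have OmV: "(x, t) \<in> V" if "x \<in> Om" for x using Vslice tI that Om_def by simp
    have zO: "\<zeta> \<in> Om" using Vslice zt Om_def by simp
    have zsO: "zs t \<in> Om" using r Om_def by simp
    have tJ: "t \<in> J" using tI IJ by blast
    define E where "E x = f x t - F (x * c t - h t) / sq2 t" for x
    define E1 where "E1 x = G1 (x, t) - c t * F1 (x * c t - h t) / sq2 t" for x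
    have affd: "((\<lambda>x. x * c t - h t) has_field_derivative c t) (at x)" for x
      by (auto intro!: derivative_eq_intros)
    have Ed: "(E has_field_derivative E1 x) (at x)" if x: "x \<in> Om" for x
    proof -
      have xU: "(x, t) \<in> U" using VU' OmV[OF x] .
      have "(\<lambda>w. f w t) field_differentiable at x" using f_hol xU by auto
      then have a: "((\<lambda>w. f w t) has_field_derivative G1 (x, t)) (at x)"
        unfolding G1_def pz_def G_def by (simp add: DERIV_deriv_iff_field_differentiable)
      have xW: "x * c t - h t \<in> W" using OmV[OF x] V_def by simp
      from DERIV_chain2[OF Fd[OF xW] affd]
      have b: "((\<lambda>x. F (x * c t - h t)) has_field_derivative F1 (x * c t - h t) * c t) (at x)" .
      from DERIV_diff[OF a DERIV_cdivide[OF b, of "sq2 t"]]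
      show ?thesis unfolding E_def E1_def by (simp add: mult.commute)
    qed
    have E1d: "(E1 has_field_derivative 0) (at x)" if x: "x \<in> Om" for x
    proof -
      have xU: "(x, t) \<in> U" using VU' OmV[OF x] .
      have "(\<lambda>w. G1 (w, t)) field_differentiable at x" using sdiff[OF _ xU] HS1 HS_def by blast
      then have a: "((\<lambda>w. G1 (w, t)) has_field_derivative G2 (x, t)) (at x)"
        unfolding G2_def pz_def by (simp add: DERIV_deriv_iff_field_differentiable)
      have xW: "x * c t - h t \<in> W" using OmV[OF x] V_def by simp
      from DERIV_chain2[OF F1d[OF xW] affd]
      have b: "((\<lambda>x. F1 (x * c t - h t)) has_field_derivative T (x * c t - h t) * c t) (at x)" .
      from DERIV_diff[OF a DERIV_cdivide[OF DERIV_cmult[OF b, of "c t"], of "sq2 t"]]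
      have "(E1 has_field_derivative G2 (x, t) - c t * (T (x * c t - h t) * c t) / sq2 t) (at x)"
        unfolding E1_def .
      moreover have "G2 (x, t) - c t * (T (x * c t - h t) * c t) / sq2 t = 0"
      proof -
        have "T (x * c t - h t) = sq2 t * (G2 (x, t) * (ic t * ic t))" using transport[OF OmV[OF x]] by simp
        then show ?thesis using sq2nz[OF tJ] cic[of t]
          by (simp add: field_simps) (metis mult.assoc mult.commute mult_1)
      qed
      ultimately show ?thesis by simp
    qed
    have "\<exists>C. \<forall>x\<in>Om. E1 x = C"
    proof (rule has_field_derivative_zero_constant)
      fix x assume x: "x \<in> Om"
      show "(E1 has_field_derivative 0) (at x within Om)" using has_field_derivative_at_within[OF E1d[OF x]] .
    qed (simp add: Om_def)
    then obtain C1 where C1: "\<And>x. x \<in> Om \<Longrightarrow> E1 x = C1" by blast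
    have A1e: "A1 t = C1"
    proof -
      have "E1 (zs t) = A1 t" unfolding E1_def A1_def zsxi G1_def ..
      then show ?thesis using C1[OF zsO] by simp
    qed
    have "\<exists>C. \<forall>x\<in>Om. E x - A1 t * x = C"
    proof (rule has_field_derivative_zero_constant)
      fix x assume x: "x \<in> Om"
      have "((\<lambda>x. E x - A1 t * x) has_field_derivative E1 x - A1 t) (at x)"
        using Ed[OF x] by (auto intro!: derivative_eq_intros)
      then show "((\<lambda>x. E x - A1 t * x) has_field_derivative 0) (at x within Om)"
        using C1[OF x] A1e by (auto intro: has_field_derivative_at_within)
    qed (simp add: Om_def)
    then obtain C0 where C0: "\<And>x. x \<in> Om \<Longrightarrow> E x - A1 t * x = C0" by blast
    have "E (zs t) - A1 t * zs t = A0 t" unfolding E_def A0_def zsxi G_def by simp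
    then have "E \<zeta> - A1 t * \<zeta> = A0 t" using C0[OF zO] C0[OF zsO] by simp
    then show ?thesis unfolding E_def by (simp add: algebra_simps)
  qed
  have zsI: "smooth1 I zs" using smooth1_subset[OF zsJ2 IJ2] .
  have cI: "smooth1 I c" using smooth1_subset[OF cJ IJ] .
  have zsU: "(zs t, t) \<in> U" if "t \<in> I" for t using VU' zsV[OF that] .
  have smcI: "smooth1 I (\<lambda>t. K (zs t, t))" if "SM U K" for K
    by (rule smooth1_curve[OF Iopen zsI smooth1_id[OF Iopen] zsU that])
  have sq2I: "smooth1 I sq2"
  proof -
    have "smooth1 I (\<lambda>t. complex_of_real (t - u0) * complex_of_real (t - u0))"
      using smooth1_subset[OF sJ IJ] Iopen by (intro smooth1_mult) auto
    then show ?thesis by (rule smooth1_cong[OF Iopen, rotated]) (simp add: sq2_def power2_eq_square)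
  qed
  have sq2nzI: "sq2 t \<noteq> 0" if "t \<in> I" for t using sq2nz IJ that by blast
  have A1I: "smooth1 I A1" unfolding A1_def
    using Iopen smcI[OF SMs(2)] cI sq2I sq2nzI
    by (intro smooth1_diff' smooth1_divide smooth1_mult smooth1_const) auto
  have A0I: "smooth1 I A0" unfolding A0_def
    using Iopen smcI[OF SMs(1)] sq2I sq2nzI A1I zsI
    by (intro smooth1_diff' smooth1_divide smooth1_mult smooth1_const) auto
  have hI: "smooth1 I h" using smooth1_subset[OF hJ2 IJ2] .
  show ?thesis
  proof (intro exI conjI)
    show "open V" by (rule Vopen)
    show "(z0, u1) \<in> V" by (rule p0V)
    show "V \<subseteq> U" by (rule VU)
    show "open W" by (rule Wopen)
    show "F holomorphic_on W" by (rule Fhol)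
    show "\<forall>w\<in>W. (deriv ^^ 3) F w \<noteq> 0" using F3nz by blast
    show "open I" by (rule Iopen)
    show "snd ` V \<subseteq> I" unfolding V_def by auto
    show "smooth_on I h" by (rule smooth1_smooth_on[OF Iopen hI])
    show "smooth_on I A1" by (rule smooth1_smooth_on[OF Iopen A1I])
    show "smooth_on I A0" by (rule smooth1_smooth_on[OF Iopen A0I])
    show "\<forall>(z, u)\<in>V. z * cpow_ik \<kappa> u0 u - h u \<in> W \<and>
              f z u = F (z * cpow_ik \<kappa> u0 u - h u) / of_real ((u - u0)^2) + A1 u * z + A0 u"
      using repr unfolding V_def c_def sq2_def by auto
  qed
qed

theorem mainTheorem7:
  fixes \<kappa> u0 :: real
    and f :: "complex \<Rightarrow> real \<Rightarrow> complex"
    and U :: "(complex \<times> real) set"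
  assumes U_open: "open U" and U_conn: "connected U"
    and U_sub: "U \<subseteq> {(z, u). u > u0}"
    and f_smooth: "smooth_on U (\<lambda>p. f (fst p) (snd p))"
    and f_hol: "\<forall>(z, u)\<in>U. (\<lambda>w. f w u) field_differentiable (at z)"
    and f_zz: "\<forall>(z, u)\<in>U. fzz f z u \<noteq> 0"
    and f_zzz: "\<forall>(z, u)\<in>U. fzzz f z u \<noteq> 0"
  shows "(\<forall>(z, u)\<in>U.
            deriv (\<lambda>w. of_real (u - u0) * psi f w u / phi f w u) z
          = deriv (\<lambda>w. (2 * \<i> * of_real \<kappa> - 2) / phi f w u) z + \<i> * of_real \<kappa>)
     \<longleftrightarrow>
     (\<forall>p\<in>U. \<exists>V. open V \<and> p \<in> V \<and> V \<subseteq> U \<and>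
        (\<exists>F h A1 A0 W I.
           open W \<and> F holomorphic_on W \<and> (\<forall>w\<in>W. (deriv ^^ 3) F w \<noteq> 0) \<and>
           open I \<and> snd ` V \<subseteq> I \<and>
           smooth_on I (h :: real \<Rightarrow> complex) \<and> smooth_on I (A1 :: real \<Rightarrow> complex) \<and>
           smooth_on I (A0 :: real \<Rightarrow> complex) \<and>
           (\<forall>(z, u)\<in>V. z * cpow_ik \<kappa> u0 u - h u \<in> W \<and>
              f z u = F (z * cpow_ik \<kappa> u0 u - h u) / of_real ((u - u0)^2)
                      + A1 u * z + A0 u)))"
proof
  assume EQ: "\<forall>(z, u)\<in>U.
            deriv (\<lambda>w. of_real (u - u0) * psi f w u / phi f w u) z
          = deriv (\<lambda>w. (2 * \<i> * of_real \<kappa> - 2) / phi f w u) z + \<i> * of_real \<kappa>"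
  show "\<forall>p\<in>U. \<exists>V. open V \<and> p \<in> V \<and> V \<subseteq> U \<and>
        (\<exists>F h A1 A0 W I.
           open W \<and> F holomorphic_on W \<and> (\<forall>w\<in>W. (deriv ^^ 3) F w \<noteq> 0) \<and>
           open I \<and> snd ` V \<subseteq> I \<and>
           smooth_on I (h :: real \<Rightarrow> complex) \<and> smooth_on I (A1 :: real \<Rightarrow> complex) \<and>
           smooth_on I (A0 :: real \<Rightarrow> complex) \<and>
           (\<forall>(z, u)\<in>V. z * cpow_ik \<kappa> u0 u - h u \<in> W \<and>
              f z u = F (z * cpow_ik \<kappa> u0 u - h u) / of_real ((u - u0)^2)
                      + A1 u * z + A0 u))"
  proof
    fix p assume p: "p \<in> U"
    obtain z0 u1 where pp: "p = (z0, u1)" by (cases p)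
    show "\<exists>V. open V \<and> p \<in> V \<and> V \<subseteq> U \<and>
        (\<exists>F h A1 A0 W I.
           open W \<and> F holomorphic_on W \<and> (\<forall>w\<in>W. (deriv ^^ 3) F w \<noteq> 0) \<and>
           open I \<and> snd ` V \<subseteq> I \<and>
           smooth_on I (h :: real \<Rightarrow> complex) \<and> smooth_on I (A1 :: real \<Rightarrow> complex) \<and>
           smooth_on I (A0 :: real \<Rightarrow> complex) \<and>
           (\<forall>(z, u)\<in>V. z * cpow_ik \<kappa> u0 u - h u \<in> W \<and>
              f z u = F (z * cpow_ik \<kappa> u0 u - h u) / of_real ((u - u0)^2)
                      + A1 u * z + A0 u))"
      unfolding pp by (rule forward_pt[OF U_open U_sub f_smooth f_hol f_zz f_zzz EQ p[unfolded pp]])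
  qed
next
  assume LOC: "\<forall>p\<in>U. \<exists>V. open V \<and> p \<in> V \<and> V \<subseteq> U \<and>
        (\<exists>F h A1 A0 W I.
           open W \<and> F holomorphic_on W \<and> (\<forall>w\<in>W. (deriv ^^ 3) F w \<noteq> 0) \<and>
           open I \<and> snd ` V \<subseteq> I \<and>
           smooth_on I (h :: real \<Rightarrow> complex) \<and> smooth_on I (A1 :: real \<Rightarrow> complex) \<and>
           smooth_on I (A0 :: real \<Rightarrow> complex) \<and>
           (\<forall>(z, u)\<in>V. z * cpow_ik \<kappa> u0 u - h u \<in> W \<and>
              f z u = F (z * cpow_ik \<kappa> u0 u - h u) / of_real ((u - u0)^2)
                      + A1 u * z + A0 u))"
  show "\<forall>(z, u)\<in>U.
            deriv (\<lambda>w. of_real (u - u0) * psi f w u / phi f w u) z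
          = deriv (\<lambda>w. (2 * \<i> * of_real \<kappa> - 2) / phi f w u) z + \<i> * of_real \<kappa>"
  proof (clarify)
    fix z u assume zu: "(z, u) \<in> U"
    have "\<exists>V. open V \<and> (z, u) \<in> V \<and> V \<subseteq> U \<and>
        (\<exists>F h A1 A0 W I.
           open W \<and> F holomorphic_on W \<and> (\<forall>w\<in>W. (deriv ^^ 3) F w \<noteq> 0) \<and>
           open I \<and> snd ` V \<subseteq> I \<and>
           smooth_on I (h :: real \<Rightarrow> complex) \<and> smooth_on I (A1 :: real \<Rightarrow> complex) \<and>
           smooth_on I (A0 :: real \<Rightarrow> complex) \<and>
           (\<forall>(z, u)\<in>V. z * cpow_ik \<kappa> u0 u - h u \<in> W \<and>
              f z u = F (z * cpow_ik \<kappa> u0 u - h u) / of_real ((u - u0)^2)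
                      + A1 u * z + A0 u))"
      by (rule bspec[OF LOC zu])
    then obtain V F h A1 A0 W I where
      V: "open V" "(z, u) \<in> V" "V \<subseteq> U" and
      rest: "open W" "F holomorphic_on W" "\<forall>w\<in>W. (deriv ^^ 3) F w \<noteq> 0"
        "open I" "snd ` V \<subseteq> I" "smooth_on I (h :: real \<Rightarrow> complex)"
        "\<forall>(z, u)\<in>V. z * cpow_ik \<kappa> u0 u - h u \<in> W \<and>
              f z u = F (z * cpow_ik \<kappa> u0 u - h u) / of_real ((u - u0)^2) + A1 u * z + A0 u"
      by (elim exE conjE) (rule that; assumption)
    show "deriv (\<lambda>w. of_real (u - u0) * psi f w u / phi f w u) z
          = deriv (\<lambda>w. (2 * \<i> * of_real \<kappa> - 2) / phi f w u) z + \<i> * of_real \<kappa>"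
      by (rule backward_pt[OF V U_sub f_zz rest])
  qed
qed


end
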